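(* Let $\Omega$ be a verification operator for $|\Psi\rangle$ with second largest eigenvalue $\beta$ and smallest eigenvalue $\tau$, and take $N=1$. If $\beta\ge1/2$, then $$\zeta(1,\delta,\Omega)=\begin{cases}0,&0\le\delta\le\beta,\\ \frac{\beta(\delta-\beta)}{1-\beta},&\beta\le\delta\le\frac{1+\beta}{2},\\ \frac{\delta(2-\beta)-1}{1-\beta},&\frac{1+\beta}{2}\le\delta\le1.\end{cases}$$ If $\beta<1/2$, then $$\zeta(1,\delta,\Omega)=\begin{cases}0,&0\le\delta\le\beta,\\ \frac{\tau(\delta-\beta)}{1+\tau-2\beta},&\beta\le\delta\le\frac{1+\tau}{2},\\ \delta-\frac12,&\frac{1+\tau}{2}\le\delta\le\frac{1+\beta}{2},\\ \frac{\delta(2-\beta)-1}{1-\beta},&\frac{1+\beta}{2}\le\delta\le1.\end{cases}$$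
   Context: Let $\mathcal H$ be a Hilbert space of finite dimension $D\ge2$ and $|\Psi\rangle\in\mathcal H$ a unit vector. A verification operator for $|\Psi\rangle$ is a Hermitian operator $\Omega$ on $\mathcal H$ with $0\le\Omega\le1$, $\Omega|\Psi\rangle=|\Psi\rangle$, whose eigenvalue $1$ is nondegenerate; its eigenvalues are $1=\lambda_1>\lambda_2\ge\dots\ge\lambda_D\ge0$, with $\beta=\lambda_2$, $\tau=\lambda_D$. For an integer $N\ge1$ and a density operator $\rho$ on $\mathcal H^{\otimes(N+1)}$ put $p_\rho=\mathrm{tr}[(\Omega^{\otimes N}\otimes 1)\rho]$ and $f_\rho=\mathrm{tr}[(\Omega^{\otimes N}\otimes|\Psi\rangle\langle\Psi|)\rho]$, and $\zeta(N,\delta,\Omega)=\min\{f_\rho:p_\rho\ge\delta\}$ for $0\le\delta\le1$, the minimum over permutation-invariant density operators on $\mathcal H^{\otimes(N+1)}$. *)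

theory Defs
  imports "Jordan_Normal_Form.Char_Poly"
begin

definition adj :: "complex mat \<Rightarrow> complex mat" where
  "adj A = mat (dim_col A) (dim_row A) (\<lambda>(i,j). cnj (A $$ (j,i)))"

definition hermitian_mat :: "complex mat \<Rightarrow> bool" where
  "hermitian_mat A \<longleftrightarrow> square_mat A \<and> adj A = A"

definition psd :: "complex mat \<Rightarrow> bool" where
  "psd A \<longleftrightarrow> hermitian_mat A \<and>
     (\<forall>v \<in> carrier_vec (dim_row A). 0 \<le> Re ((A *\<^sub>v v) \<bullet>c v))"

definition mtrace :: "complex mat \<Rightarrow> complex" where
  "mtrace A = (\<Sum>i<dim_row A. A $$ (i,i))"

definition density_op :: "nat \<Rightarrow> complex mat \<Rightarrow> bool" where
  "density_op n \<rho> \<longleftrightarrow> \<rho> \<in> carrier_mat n n \<and> psd \<rho> \<and> mtrace \<rho> = 1"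

text \<open>Kronecker (tensor) product; index i of C^m (x) C^p is (i div p, i mod p).\<close>
definition kron :: "complex mat \<Rightarrow> complex mat \<Rightarrow> complex mat" where
  "kron A B = mat (dim_row A * dim_row B) (dim_col A * dim_col B)
     (\<lambda>(i,j). A $$ (i div dim_row B, j div dim_col B) * B $$ (i mod dim_row B, j mod dim_col B))"

definition swap_op :: "nat \<Rightarrow> complex mat" where
  "swap_op D = mat (D*D) (D*D) (\<lambda>(i,j). if j = (i mod D) * D + i div D then 1 else 0)"

text \<open>Permutation invariance on two copies: invariant under the swap (the only
  nontrivial permutation of two tensor factors).\<close>
definition perm_invariant2 :: "nat \<Rightarrow> complex mat \<Rightarrow> bool" where
  "perm_invariant2 D \<rho> \<longleftrightarrow> swap_op D * \<rho> * adj (swap_op D) = \<rho>"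

definition proj :: "complex vec \<Rightarrow> complex mat" where
  "proj \<Psi> = mat (dim_vec \<Psi>) (dim_vec \<Psi>) (\<lambda>(i,j). \<Psi> $ i * cnj (\<Psi> $ j))"

definition verification_op :: "nat \<Rightarrow> complex vec \<Rightarrow> complex mat \<Rightarrow> bool" where
  "verification_op D \<Psi> \<Omega> \<longleftrightarrow>
     \<Psi> \<in> carrier_vec D \<and> \<Psi> \<bullet>c \<Psi> = 1 \<and>
     \<Omega> \<in> carrier_mat D D \<and> hermitian_mat \<Omega> \<and> psd \<Omega> \<and> psd (1\<^sub>m D - \<Omega>) \<and>
     \<Omega> *\<^sub>v \<Psi> = \<Psi> \<and>
     (\<forall>v \<in> carrier_vec D. \<Omega> *\<^sub>v v = v \<longrightarrow> (\<exists>c. v = c \<cdot>\<^sub>v \<Psi>))"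

text \<open>beta = second largest eigenvalue (eigenvalue 1 is nondegenerate), tau = smallest.\<close>
definition second_eig :: "complex mat \<Rightarrow> real \<Rightarrow> bool" where
  "second_eig \<Omega> \<beta> \<longleftrightarrow> eigenvalue \<Omega> (complex_of_real \<beta>) \<and> \<beta> < 1 \<and>
     (\<forall>l::real. eigenvalue \<Omega> (complex_of_real l) \<and> l \<noteq> 1 \<longrightarrow> l \<le> \<beta>)"

definition smallest_eig :: "complex mat \<Rightarrow> real \<Rightarrow> bool" where
  "smallest_eig \<Omega> \<tau> \<longleftrightarrow> eigenvalue \<Omega> (complex_of_real \<tau>) \<and>
     (\<forall>l::real. eigenvalue \<Omega> (complex_of_real l) \<longrightarrow> \<tau> \<le> l)"

definition p_val :: "nat \<Rightarrow> complex mat \<Rightarrow> complex mat \<Rightarrow> real" where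
  "p_val D \<Omega> \<rho> = Re (mtrace (kron \<Omega> (1\<^sub>m D) * \<rho>))"

definition f_val :: "complex vec \<Rightarrow> complex mat \<Rightarrow> complex mat \<Rightarrow> real" where
  "f_val \<Psi> \<Omega> \<rho> = Re (mtrace (kron \<Omega> (proj \<Psi>) * \<rho>))"

text \<open>The feasible values of f_rho; zeta(1,delta,Omega) is the minimum of this set.\<close>
definition feasible_f :: "nat \<Rightarrow> complex vec \<Rightarrow> complex mat \<Rightarrow> real \<Rightarrow> real set" where
  "feasible_f D \<Psi> \<Omega> \<delta> = {f_val \<Psi> \<Omega> \<rho> | \<rho>.
      density_op (D*D) \<rho> \<and> perm_invariant2 D \<rho> \<and> p_val D \<Omega> \<rho> \<ge> \<delta>}"

definition is_min :: "real set \<Rightarrow> real \<Rightarrow> bool" where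
  "is_min S x \<longleftrightarrow> x \<in> S \<and> (\<forall>y\<in>S. x \<le> y)"

end

theory Submission
  imports Defs "Jordan_Normal_Form.Spectral_Radius" "Jordan_Normal_Form.Schur_Decomposition"
begin


lemma adj_dims[simp]: "dim_row (adj A) = dim_col A" "dim_col (adj A) = dim_row A"
  by (auto simp: adj_def)

lemma adj_carrier[simp]: "A \<in> carrier_mat n m \<Longrightarrow> adj A \<in> carrier_mat m n"
  apply (rule carrier_matI) apply (simp_all only: adj_dims) by auto

lemma adj_index[simp]: "i < dim_col A \<Longrightarrow> j < dim_row A \<Longrightarrow> adj A $$ (i,j) = cnj (A $$ (j,i))"
  by (auto simp: adj_def)

lemma adj_adj[simp]: "adj (adj A) = A"
  by (rule eq_matI, auto)

lemma adj_mult: assumes "A \<in> carrier_mat n m" "B \<in> carrier_mat m k"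
  shows "adj (A*B) = adj B * adj A"
proof (rule eq_matI)
  fix i j assume ij: "i < dim_row (adj B * adj A)" "j < dim_col (adj B * adj A)"
  have "adj (A*B) $$ (i,j) = cnj (\<Sum>l<m. A $$ (j,l) * B $$ (l,i))"
    using assms ij by (auto simp: scalar_prod_def row_def col_def atLeast0LessThan)
  also have "\<dots> = (\<Sum>l<m. cnj (B $$ (l,i)) * cnj (A $$ (j,l)))"
    by (simp add: mult.commute)
  also have "\<dots> = (adj B * adj A) $$ (i,j)"
    using assms ij by (auto simp: scalar_prod_def row_def col_def atLeast0LessThan)
  finally show "adj (A*B) $$ (i,j) = (adj B * adj A) $$ (i,j)" .
qed (use assms in auto)

lemma adj_one[simp]: "adj (1\<^sub>m n) = 1\<^sub>m n"
  by (rule eq_matI, auto)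

lemma mtrace_comm: assumes "A \<in> carrier_mat n m" "B \<in> carrier_mat m n"
  shows "mtrace (A*B) = mtrace (B*A)"
proof -
  have "mtrace (A*B) = (\<Sum>i<n. \<Sum>l<m. A $$ (i,l) * B $$ (l,i))"
    using assms by (auto simp: mtrace_def scalar_prod_def row_def col_def atLeast0LessThan)
  also have "\<dots> = (\<Sum>l<m. \<Sum>i<n. B $$ (l,i) * A $$ (i,l))"
    by (subst sum.swap) (simp add: mult.commute)
  also have "\<dots> = mtrace (B*A)"
    using assms by (auto simp: mtrace_def scalar_prod_def row_def col_def atLeast0LessThan)
  finally show ?thesis .
qed

lemma cscalar_adj: assumes "A \<in> carrier_mat n m" "x \<in> carrier_vec m" "y \<in> carrier_vec n"
  shows "(A *\<^sub>v x) \<bullet>c y = x \<bullet>c (adj A *\<^sub>v y)"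
proof -
  have "(A *\<^sub>v x) \<bullet>c y = (\<Sum>i<n. (\<Sum>j<m. A $$ (i,j) * x $ j) * cnj (y $ i))"
    using assms by (auto simp: scalar_prod_def row_def atLeast0LessThan)
  also have "\<dots> = (\<Sum>j<m. \<Sum>i<n. x $ j * cnj (cnj (A $$ (i,j)) * y $ i))"
    by (subst sum.swap) (simp add: sum_distrib_right sum_distrib_left mult_ac)
  also have "\<dots> = x \<bullet>c (adj A *\<^sub>v y)"
    using assms by (auto simp: scalar_prod_def row_def atLeast0LessThan sum_distrib_left)
  finally show ?thesis .
qed

lemma cscalar_sum: "x \<in> carrier_vec n \<Longrightarrow> y \<in> carrier_vec n \<Longrightarrow> x \<bullet>c y = (\<Sum>k<n. x$k * cnj (y$k))"
  by (auto simp: scalar_prod_def atLeast0LessThan)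

lemma cscalar_smult: "x \<in> carrier_vec n \<Longrightarrow> y \<in> carrier_vec n \<Longrightarrow> (a \<cdot>\<^sub>v x) \<bullet>c (b \<cdot>\<^sub>v y) = a * cnj b * (x \<bullet>c y)"
  by (simp add: cscalar_sum sum_distrib_left mult_ac)

lemma cscalar_cnj: "x \<in> carrier_vec n \<Longrightarrow> y \<in> carrier_vec n \<Longrightarrow> y \<bullet>c x = cnj (x \<bullet>c y)"
  by (simp add: cscalar_sum mult_ac)

lemma norm_pos: assumes "w \<in> carrier_vec n" "w \<noteq> 0\<^sub>v n"
  shows "Re (w \<bullet>c w) > 0" "w \<bullet>c w = complex_of_real (Re (w \<bullet>c w))"
proof -
  have "w \<bullet>c w > 0" using conjugate_square_greater_0_vec[OF assms(1)] assms(2) by simp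
  then have "Re (w \<bullet>c w) > 0 \<and> Im (w \<bullet>c w) = 0" by (simp add: less_complex_def)
  then show "Re (w \<bullet>c w) > 0" "w \<bullet>c w = complex_of_real (Re (w \<bullet>c w))"
    by (auto simp: complex_eq_iff)
qed

definition nv :: "complex vec \<Rightarrow> complex vec" where
  "nv w = complex_of_real (1 / sqrt (Re (w \<bullet>c w))) \<cdot>\<^sub>v w"

lemma nv_carrier[simp]: "w \<in> carrier_vec n \<Longrightarrow> nv w \<in> carrier_vec n"
  by (simp add: nv_def)

lemma nv_inner: assumes "w \<in> carrier_vec n" "w' \<in> carrier_vec n"
  shows "nv w \<bullet>c nv w' = complex_of_real (1 / sqrt (Re (w \<bullet>c w))) * complex_of_real (1 / sqrt (Re (w' \<bullet>c w'))) * (w \<bullet>c w')"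
  unfolding nv_def by (subst cscalar_smult[OF assms]) simp

lemma nv_unit: assumes "w \<in> carrier_vec n" "w \<noteq> 0\<^sub>v n"
  shows "nv w \<bullet>c nv w = 1"
proof -
  define r where "r = Re (w \<bullet>c w)"
  have r: "r > 0" "w \<bullet>c w = complex_of_real r" using norm_pos[OF assms] r_def by auto
  have "nv w \<bullet>c nv w = complex_of_real (1 / sqrt r) * complex_of_real (1 / sqrt r) * complex_of_real r"
    using nv_inner[OF assms(1) assms(1)] r unfolding r_def by metis
  also have "\<dots> = complex_of_real (1 / sqrt r * (1 / sqrt r) * r)" by (simp only: of_real_mult)
  also have "1 / sqrt r * (1 / sqrt r) * r = 1" using r(1)
    by (simp add: field_simps)
  finally show ?thesis by simp
qed

lemma nv_self: assumes "w \<bullet>c w = 1" shows "nv w = w"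
  using assms by (simp add: nv_def)

lemma unit_nonzero: fixes v :: "complex vec" assumes "v \<in> carrier_vec n" "v \<bullet>c v = 1" shows "v \<noteq> 0\<^sub>v n"
proof
  assume "v = 0\<^sub>v n"
  then have "v \<bullet>c v = 0" by simp
  with assms(2) show False by simp
qed

lemma unitary_from_cols: assumes us: "set us \<subseteq> carrier_vec n" "length us = n"
  and orth: "\<And>i j. i < n \<Longrightarrow> j < n \<Longrightarrow> us!i \<bullet>c us!j = (if i = j then 1 else 0)"
  defines "U \<equiv> mat_of_cols n us"
  shows "U \<in> carrier_mat n n" "adj U * U = 1\<^sub>m n" "U * adj U = 1\<^sub>m n" "\<And>i. i < n \<Longrightarrow> col U i = us!i"
proof -
  show U: "U \<in> carrier_mat n n" using us unfolding U_def by auto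
  show "\<And>i. i < n \<Longrightarrow> col U i = us!i" unfolding U_def using us by (auto intro!: col_mat_of_cols)
  have usi: "\<And>i. i < n \<Longrightarrow> us!i \<in> carrier_vec n" using us by auto
  show 1: "adj U * U = 1\<^sub>m n"
  proof (rule eq_matI)
    fix i j assume ij: "i < dim_row (1\<^sub>m n)" "j < dim_col (1\<^sub>m n)"
    have "(adj U * U) $$ (i,j) = (\<Sum>k<n. us!j $ k * cnj (us!i $ k))"
      using U ij us unfolding U_def
      by (auto simp: scalar_prod_def row_def col_def atLeast0LessThan mat_of_cols_index mult.commute
        intro!: sum.cong)
    also have "\<dots> = us!j \<bullet>c us!i" using cscalar_sum[OF usi usi, of j i] ij by simp
    also have "\<dots> = 1\<^sub>m n $$ (i,j)" using orth ij by auto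
    finally show "(adj U * U) $$ (i,j) = 1\<^sub>m n $$ (i,j)" .
  qed (use U in auto)
  show "U * adj U = 1\<^sub>m n" using mat_mult_left_right_inverse[OF adj_carrier[OF U] U 1] .
qed


lemma mat_vec_unit: fixes A :: "complex mat" assumes "A \<in> carrier_mat nr n" "j < n" shows "A *\<^sub>v unit_vec n j = col A j"
proof (rule eq_vecI)
  fix i assume "i < dim_vec (col A j)"
  then have i: "i < nr" using assms by simp
  have "(A *\<^sub>v unit_vec n j) $ i = row A i \<bullet> unit_vec n j" using i assms by simp
  also have "\<dots> = row A i $ j" by (rule scalar_prod_right_unit[OF assms(2)])
  finally show "(A *\<^sub>v unit_vec n j) $ i = col A j $ i" using i assms by simp
qed (use assms in simp)

lemma unitary_completion: fixes v :: "complex vec" assumes v: "v \<in> carrier_vec n" "v \<bullet>c v = 1"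
  shows "\<exists>W. W \<in> carrier_mat n n \<and> adj W * W = 1\<^sub>m n \<and> W * adj W = 1\<^sub>m n \<and> col W 0 = v"
proof -
  have v0: "v \<noteq> 0\<^sub>v n" using unit_nonzero v .
  have n: "n > 0"
  proof (rule ccontr)
    assume "\<not> n > 0"
    then have "n = 0" by simp
    then have "v = 0\<^sub>v n" by (intro eq_vecI) (use v in auto)
    with v0 show False by simp
  qed
  interpret cof_vec_space n "TYPE(complex)" .
  define bs where "bs = basis_completion v"
  from basis_completion[OF v(1) v0] have bs: "set bs \<subseteq> carrier_vec n" "distinct bs"
    "\<not> lin_dep (set bs)" "length bs = n" "hd bs = v" unfolding bs_def by auto
  define ws0 where "ws0 = gram_schmidt n bs"
  from gram_schmidt_result[OF bs(1) bs(2) bs(3) ws0_def] bs(4)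
  have ws0: "corthogonal ws0" "set ws0 \<subseteq> carrier_vec n" "length ws0 = n" by auto
  obtain rest where bsr: "bs = v # rest" using bs(4) bs(5) n by (cases bs) auto
  have hd0: "hd ws0 = v" unfolding ws0_def bsr using gram_schmidt_hd v(1) by blast
  have ws00: "ws0 ! 0 = v" using hd0 ws0(3) n by (cases ws0) auto
  define ws where "ws = map nv ws0"
  have wsc: "set ws \<subseteq> carrier_vec n" "length ws = n" using ws0 unfolding ws_def by auto
  have w0c: "\<And>i. i < n \<Longrightarrow> ws0 ! i \<in> carrier_vec n" using ws0 by auto
  have nz: "\<And>i. i < n \<Longrightarrow> ws0 ! i \<noteq> 0\<^sub>v n"
  proof
    fix i assume i: "i < n" "ws0 ! i = 0\<^sub>v n"
    have "ws0 ! i \<bullet>c ws0 ! i \<noteq> 0" using corthogonalD[OF ws0(1), of i i] i ws0(3) by auto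
    with i show False by simp
  qed
  have orth: "\<And>i j. i < n \<Longrightarrow> j < n \<Longrightarrow> ws!i \<bullet>c ws!j = (if i = j then 1 else 0)"
  proof -
    fix i j assume ij: "i < n" "j < n"
    show "ws!i \<bullet>c ws!j = (if i = j then 1 else 0)"
    proof (cases "i = j")
      case True
      then show ?thesis using nv_unit[OF w0c nz, of j] ij ws0(3) unfolding ws_def by simp
    next
      case False
      then have "ws0 ! i \<bullet>c ws0 ! j = 0" using corthogonalD[OF ws0(1), of i j] ij ws0(3) by auto
      then show ?thesis using nv_inner[OF w0c w0c, of i j] ij ws0(3) False unfolding ws_def by simp
    qed
  qed
  have ws0v: "ws ! 0 = v" unfolding ws_def using ws00 nv_self[OF v(2)] n ws0(3) by simp
  define W where "W = mat_of_cols n ws"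
  note U = unitary_from_cols[OF wsc orth, folded W_def]
  show ?thesis
    by (intro exI[of _ W]) (use U n ws0v in auto)
qed

lemma spectral_list: fixes A :: "complex mat" assumes "A \<in> carrier_mat n n" "hermitian_mat A"
  shows "\<exists>us. length us = n \<and> set us \<subseteq> carrier_vec n \<and>
     (\<forall>i<n. \<forall>j<n. us!i \<bullet>c us!j = (if i = j then 1 else 0)) \<and>
     (\<forall>i<n. \<exists>l::real. A *\<^sub>v us!i = complex_of_real l \<cdot>\<^sub>v us!i)"
  using assms
proof (induction n arbitrary: A)
  case 0
  show ?case by (intro exI[of _ "[]"]) auto
next
  case (Suc m)
  define n where "n = Suc m"
  have A: "A \<in> carrier_mat n n" and hA: "adj A = A" using Suc.prems by (auto simp: hermitian_mat_def n_def)
  from spectrum_non_empty[OF A] obtain e where "eigenvalue A e" unfolding spectrum_def n_def by auto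
  then obtain v0 where "eigenvector A v0 e" unfolding eigenvalue_def by auto
  then have v0: "v0 \<in> carrier_vec n" "v0 \<noteq> 0\<^sub>v n" "A *\<^sub>v v0 = e \<cdot>\<^sub>v v0"
    unfolding eigenvector_def using A by auto
  define v where "v = nv v0"
  have vc: "v \<in> carrier_vec n" using v0 unfolding v_def by simp
  have vu: "v \<bullet>c v = 1" using nv_unit[OF v0(1) v0(2)] unfolding v_def .
  have Av: "A *\<^sub>v v = e \<cdot>\<^sub>v v"
    unfolding v_def nv_def using mult_mat_vec[OF A v0(1)] v0(3) by (simp add: smult_smult_assoc mult.commute)
  obtain W where W: "W \<in> carrier_mat n n" "adj W * W = 1\<^sub>m n" "W * adj W = 1\<^sub>m n" "col W 0 = v"
    using unitary_completion[OF vc vu] by blast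
  have aW: "adj W \<in> carrier_mat n n" using W(1) by simp
  define M where "M = adj W * A * W"
  have M: "M \<in> carrier_mat n n" unfolding M_def using mult_carrier_mat[OF mult_carrier_mat[OF aW A] W(1)] .
  have hM: "adj M = M"
  proof -
    have "adj M = adj (A * W) * adj (adj W)" unfolding M_def
      using adj_mult[OF aW mult_carrier_mat[OF A W(1)]] assoc_mult_mat[OF aW A W(1)] by simp
    also have "\<dots> = adj W * adj A * adj (adj W)" using adj_mult[OF A W(1)] by simp
    also have "\<dots> = M" unfolding M_def hA by simp
    finally show ?thesis .
  qed
  have AW: "A * W = W * M"
  proof -
    have "W * M = (W * adj W) * (A * W)" unfolding M_def
      using assoc_mult_mat[OF aW A W(1)] assoc_mult_mat[OF W(1) aW mult_carrier_mat[OF A W(1)]] by simp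
    also have "\<dots> = A * W" using W(3) A W(1) by simp
    finally show ?thesis by simp
  qed
  have n0: "0 < n" unfolding n_def by simp
  have We0: "W *\<^sub>v unit_vec n 0 = v" using mat_vec_unit[OF W(1) n0] W(4) by simp
  have Me0: "M *\<^sub>v unit_vec n 0 = e \<cdot>\<^sub>v unit_vec n 0"
  proof -
    have "M *\<^sub>v unit_vec n 0 = adj W *\<^sub>v (A *\<^sub>v (W *\<^sub>v unit_vec n 0))"
      unfolding M_def using assoc_mult_mat_vec[OF mult_carrier_mat[OF aW A] W(1), of "unit_vec n 0"]
        assoc_mult_mat_vec[OF aW A, of "W *\<^sub>v unit_vec n 0"] W(1) by simp
    also have "\<dots> = e \<cdot>\<^sub>v (adj W *\<^sub>v (W *\<^sub>v unit_vec n 0))"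
      unfolding We0 Av using mult_mat_vec[OF aW vc] We0 by simp
    also have "adj W *\<^sub>v (W *\<^sub>v unit_vec n 0) = unit_vec n 0"
      using assoc_mult_mat_vec[OF aW W(1), of "unit_vec n 0", symmetric] W(2) by simp
    finally show ?thesis .
  qed
  have Mcol0: "\<And>i. i < n \<Longrightarrow> M $$ (i,0) = (if i = 0 then e else 0)"
  proof -
    fix i assume i: "i < n"
    have "M $$ (i,0) = col M 0 $ i" using M i by simp
    also have "\<dots> = (e \<cdot>\<^sub>v unit_vec n 0) $ i" using mat_vec_unit[OF M n0] Me0 by simp
    finally show "M $$ (i,0) = (if i = 0 then e else 0)" using i n0 by simp
  qed
  have Mherm: "\<And>i j. i < n \<Longrightarrow> j < n \<Longrightarrow> M $$ (i,j) = cnj (M $$ (j,i))"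
  proof -
    fix i j assume ij: "i < n" "j < n"
    have "M $$ (i,j) = adj M $$ (i,j)" using hM by simp
    also have "\<dots> = cnj (M $$ (j,i))" using ij M by simp
    finally show "M $$ (i,j) = cnj (M $$ (j,i))" .
  qed
  have ereal: "e = complex_of_real (Re e)"
  proof -
    have "e = cnj e" using Mherm[OF n0 n0] Mcol0[OF n0] by simp
    then show ?thesis by (simp add: complex_eq_iff)
  qed
  have Mrow0: "\<And>j. 0 < j \<Longrightarrow> j < n \<Longrightarrow> M $$ (0,j) = 0"
  proof -
    fix j assume j: "0 < j" "j < n"
    have "M $$ (0,j) = cnj (M $$ (j,0))" using Mherm[OF n0 j(2)] .
    also have "\<dots> = 0" using Mcol0[OF j(2)] j(1) by simp
    finally show "M $$ (0,j) = 0" .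
  qed
  define A3 where "A3 = mat m m (\<lambda>(i,j). M $$ (Suc i, Suc j))"
  have A3: "A3 \<in> carrier_mat m m" unfolding A3_def by simp
  have hA3: "hermitian_mat A3"
    unfolding hermitian_mat_def
  proof
    show "square_mat A3" using A3 by simp
    show "adj A3 = A3"
    proof (rule eq_matI)
      fix i j assume ij: "i < dim_row A3" "j < dim_col A3"
      then have ij': "i < m" "j < m" using A3 by auto
      have "adj A3 $$ (i,j) = cnj (M $$ (Suc j, Suc i))" using ij' A3 by (simp add: A3_def)
      also have "\<dots> = M $$ (Suc i, Suc j)" using Mherm[of "Suc i" "Suc j"] ij' unfolding n_def by simp
      finally show "adj A3 $$ (i,j) = A3 $$ (i,j)" using ij' by (simp add: A3_def)
    qed (use A3 in auto)
  qed
  from Suc.IH[OF A3 hA3] obtain ys where ys: "length ys = m" "set ys \<subseteq> carrier_vec m"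
    "\<forall>i<m. \<forall>j<m. ys!i \<bullet>c ys!j = (if i = j then 1 else 0)"
    "\<forall>i<m. \<exists>l::real. A3 *\<^sub>v ys!i = complex_of_real l \<cdot>\<^sub>v ys!i" by blast
  define lift where "lift y = vec n (\<lambda>i. if i = 0 then 0 else y $ (i - 1))" for y :: "complex vec"
  have liftc: "lift y \<in> carrier_vec n" for y unfolding lift_def by simp
  have lift_inner: "lift y \<bullet>c lift y' = y \<bullet>c y'" if "y \<in> carrier_vec m" "y' \<in> carrier_vec m" for y y'
    unfolding cscalar_sum[OF liftc liftc] cscalar_sum[OF that] n_def
    by (subst sum.lessThan_Suc_shift) (simp add: lift_def n_def)
  have lift_e0: "lift y \<bullet>c unit_vec n 0 = 0" "unit_vec n 0 \<bullet>c lift y = 0" for y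
    unfolding cscalar_sum[OF liftc unit_vec_carrier] cscalar_sum[OF unit_vec_carrier liftc]
    by (auto simp: lift_def intro!: sum.neutral)
  have e0e0: "(unit_vec n 0 :: complex vec) \<bullet>c unit_vec n 0 = 1"
  proof -
    have "(unit_vec n 0 :: complex vec) \<bullet>c unit_vec n 0 = (\<Sum>k<n. if k = 0 then 1 else 0)"
      unfolding cscalar_sum[OF unit_vec_carrier unit_vec_carrier] by (rule sum.cong) auto
    also have "\<dots> = 1" using n0 by (simp add: sum.delta)
    finally show ?thesis .
  qed
  have Mlift: "M *\<^sub>v lift y = complex_of_real l \<cdot>\<^sub>v lift y"
    if y: "y \<in> carrier_vec m" and Ay: "A3 *\<^sub>v y = complex_of_real l \<cdot>\<^sub>v y" for y l
  proof (rule eq_vecI)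
    show "dim_vec (M *\<^sub>v lift y) = dim_vec (complex_of_real l \<cdot>\<^sub>v lift y)" using M by (simp add: lift_def)
    fix i assume "i < dim_vec (complex_of_real l \<cdot>\<^sub>v lift y)"
    then have i: "i < n" by (simp add: lift_def)
    have "(M *\<^sub>v lift y) $ i = (\<Sum>k<n. M $$ (i,k) * lift y $ k)"
      using M i liftc by (auto simp: scalar_prod_def atLeast0LessThan lift_def intro!: sum.cong)
    also have "\<dots> = (\<Sum>k<m. M $$ (i, Suc k) * y $ k)"
      unfolding n_def by (subst sum.lessThan_Suc_shift) (simp add: lift_def n_def)
    also have "\<dots> = (complex_of_real l \<cdot>\<^sub>v lift y) $ i"
    proof (cases i)
      case 0
      then show ?thesis using Mrow0 by (simp add: lift_def n_def i)
    next
      case (Suc i')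
      then have i': "i' < m" using i n_def by simp
      have "(\<Sum>k<m. M $$ (i, Suc k) * y $ k) = (A3 *\<^sub>v y) $ i'"
        using i' y A3 Suc by (auto simp: scalar_prod_def atLeast0LessThan A3_def intro!: sum.cong)
      also have "\<dots> = complex_of_real l * y $ i'" using Ay i' y by simp
      finally show ?thesis using Suc i by (simp add: lift_def)
    qed
    finally show "(M *\<^sub>v lift y) $ i = (complex_of_real l \<cdot>\<^sub>v lift y) $ i" .
  qed
  define zs where "zs = unit_vec n 0 # map lift ys"
  have zsl: "length zs = n" unfolding zs_def n_def using ys(1) by simp
  have zsc: "set zs \<subseteq> carrier_vec n" unfolding zs_def using liftc by auto
  have zs_orth: "\<forall>i<n. \<forall>j<n. zs!i \<bullet>c zs!j = (if i = j then 1 else 0)"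
  proof (intro allI impI)
    fix i j assume ij: "i < n" "j < n"
    show "zs!i \<bullet>c zs!j = (if i = j then 1 else 0)"
    proof (cases i)
      case 0
      then show ?thesis
        using lift_e0 e0e0 ij ys(1) by (cases j) (auto simp: zs_def n_def)
    next
      case (Suc i')
      then have i': "i' < m" using ij n_def by simp
      show ?thesis
      proof (cases j)
        case 0
        then show ?thesis using Suc lift_e0 i' ys(1) by (simp add: zs_def)
      next
        case (Suc j')
        then have j': "j' < m" using ij n_def by simp
        have "zs!i \<bullet>c zs!j = ys!i' \<bullet>c ys!j'"
          using \<open>i = Suc i'\<close> Suc i' j' ys(1,2) lift_inner by (simp add: zs_def subset_iff)
        then show ?thesis using ys(3) i' j' Suc \<open>i = Suc i'\<close> by simp
      qed
    qed
  qed
  have zs_eig: "\<forall>i<n. \<exists>l::real. M *\<^sub>v zs!i = complex_of_real l \<cdot>\<^sub>v zs!i"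
  proof (intro allI impI)
    fix i assume i: "i < n"
    show "\<exists>l::real. M *\<^sub>v zs!i = complex_of_real l \<cdot>\<^sub>v zs!i"
    proof (cases i)
      case 0
      then show ?thesis using Me0 ereal by (intro exI[of _ "Re e"]) (simp add: zs_def)
    next
      case (Suc i')
      then have i': "i' < m" using i n_def by simp
      obtain l where "A3 *\<^sub>v ys!i' = complex_of_real l \<cdot>\<^sub>v ys!i'" using ys(4) i' by blast
      then have "M *\<^sub>v lift (ys!i') = complex_of_real l \<cdot>\<^sub>v lift (ys!i')"
        using Mlift ys(1,2) i' by (simp add: subset_iff)
      then show ?thesis using Suc i' ys(1) by (intro exI[of _ l]) (simp add: zs_def)
    qed
  qed
  define us where "us = map (\<lambda>z. W *\<^sub>v z) zs"
  have zi: "\<And>i. i < n \<Longrightarrow> zs!i \<in> carrier_vec n" using zsc zsl by auto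
  show ?case
  proof (intro exI[of _ us] conjI allI impI)
    show "length us = Suc m" unfolding us_def using zsl n_def by simp
    show "set us \<subseteq> carrier_vec (Suc m)" unfolding us_def using W(1) zsc n_def by auto
  next
    fix i j assume ij: "i < Suc m" "j < Suc m"
    then have ij': "i < n" "j < n" unfolding n_def .
    have "us!i \<bullet>c us!j = zs!i \<bullet>c (adj W *\<^sub>v (W *\<^sub>v zs!j))"
      unfolding us_def using ij' zsl cscalar_adj[OF W(1) zi[OF ij'(1)] mult_mat_vec_carrier[OF W(1) zi[OF ij'(2)]]] by simp
    also have "adj W *\<^sub>v (W *\<^sub>v zs!j) = zs!j"
      using assoc_mult_mat_vec[OF aW W(1) zi[OF ij'(2)], symmetric] W(2) zi[OF ij'(2)] by simp
    finally show "us!i \<bullet>c us!j = (if i = j then 1 else 0)" using zs_orth ij' by simp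
  next
    fix i assume "i < Suc m"
    then have i: "i < n" unfolding n_def .
    obtain l where l: "M *\<^sub>v zs!i = complex_of_real l \<cdot>\<^sub>v zs!i" using zs_eig i by blast
    have "A *\<^sub>v us!i = (A * W) *\<^sub>v zs!i" unfolding us_def using i zsl A W(1) zi by simp
    also have "\<dots> = W *\<^sub>v (M *\<^sub>v zs!i)" unfolding AW using W(1) M zi[OF i] by simp
    also have "\<dots> = complex_of_real l \<cdot>\<^sub>v us!i" unfolding l us_def
      using mult_mat_vec[OF W(1) zi[OF i]] i zsl by simp
    finally show "\<exists>l::real. A *\<^sub>v us!i = complex_of_real l \<cdot>\<^sub>v us!i" by blast
  qed
qed



lemma sum_pair: "(\<Sum>k<a*(b::nat). f k) = (\<Sum>i<a. \<Sum>j<b. f (i*b+j))"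
proof -
  have inj: "inj_on (\<lambda>(i,j). i*b+j) ({..<a}\<times>{..<b})"
  proof (rule inj_onI, clarify)
    fix i j i' j' assume "i < a" "j < b" "i' < a" "j' < b" "i*b+j = i'*b+j'"
    then have "(i*b+j) div b = (i'*b+j') div b" "(i*b+j) mod b = (i'*b+j') mod b" by simp_all
    then show "i = i' \<and> j = j'" using \<open>j < b\<close> \<open>j' < b\<close> by simp
  qed
  have img: "(\<lambda>(i,j). i*b+j) ` ({..<a}\<times>{..<b}) = {..<a*b}"
  proof (intro equalityI subsetI)
    fix k assume "k \<in> (\<lambda>(i,j). i*b+j) ` ({..<a}\<times>{..<b})"
    then obtain i j where ij: "i < a" "j < b" "k = i*b+j" by auto
    have "i*b + j < i*b + b" using ij by simp
    also have "\<dots> = (Suc i) * b" by simp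
    also have "\<dots> \<le> a * b" using ij by (intro mult_right_mono) auto
    finally show "k \<in> {..<a*b}" using ij by simp
  next
    fix k assume k: "k \<in> {..<a*b}"
    then have b: "b > 0" by (cases b) auto
    have "k div b < a" using k by (simp add: div_less_iff_less_mult b)
    moreover have "k mod b < b" using b by simp
    moreover have "k = (k div b) * b + k mod b" by simp
    ultimately show "k \<in> (\<lambda>(i,j). i*b+j) ` ({..<a}\<times>{..<b})" by (intro image_eqI[of _ _ "(k div b, k mod b)"]) auto
  qed
  have "(\<Sum>k<a*b. f k) = (\<Sum>k\<in>(\<lambda>(i,j). i*b+j) ` ({..<a}\<times>{..<b}). f k)" using img by simp
  also have "\<dots> = (\<Sum>(i,j)\<in>{..<a}\<times>{..<b}. f (i*b+j))"
    by (subst sum.reindex[OF inj]) (simp add: case_prod_beta)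
  also have "\<dots> = (\<Sum>i<a. \<Sum>j<b. f (i*b+j))" by (rule sum.cartesian_product[symmetric])
  finally show ?thesis .
qed

lemma kron_dims[simp]: "dim_row (kron A B) = dim_row A * dim_row B" "dim_col (kron A B) = dim_col A * dim_col B"
  by (simp_all add: kron_def)

lemma kron_carrier[simp]: "A \<in> carrier_mat a b \<Longrightarrow> B \<in> carrier_mat c d \<Longrightarrow> kron A B \<in> carrier_mat (a*c) (b*d)"
  by (metis carrier_matD carrier_matI kron_dims)

lemma kron_index[simp]: "i < dim_row A * dim_row B \<Longrightarrow> j < dim_col A * dim_col B \<Longrightarrow>
  kron A B $$ (i,j) = A $$ (i div dim_row B, j div dim_col B) * B $$ (i mod dim_row B, j mod dim_col B)"
  by (simp add: kron_def)

lemma div_bound: "(i::nat) < a * c \<Longrightarrow> i div c < a"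
  by (cases "c = 0") (auto simp: div_less_iff_less_mult)

lemma mod_bound: "(i::nat) < a * c \<Longrightarrow> i mod c < c"
  by (cases "c = 0") auto

lemma kron_mult: assumes A: "A \<in> carrier_mat a b" and B: "B \<in> carrier_mat c d"
  and C: "C \<in> carrier_mat b e" and E: "E \<in> carrier_mat d f"
  shows "kron A B * kron C E = kron (A*C) (B*E)"
proof (rule eq_matI)
  fix i j assume ij: "i < dim_row (kron (A*C) (B*E))" "j < dim_col (kron (A*C) (B*E))"
  then have i: "i < a*c" and j: "j < e*f" using A B C E by auto
  note bd = div_bound[OF i] mod_bound[OF i] div_bound[OF j] mod_bound[OF j]
  have "(kron A B * kron C E) $$ (i,j) = (\<Sum>k<b*d. A $$ (i div c, k div d) * B $$ (i mod c, k mod d) *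
      (C $$ (k div d, j div f) * E $$ (k mod d, j mod f)))"
    using A B C E i j by (auto simp: scalar_prod_def atLeast0LessThan div_bound mod_bound intro!: sum.cong)
  also have "\<dots> = (\<Sum>k1<b. \<Sum>k2<d. A $$ (i div c, k1) * B $$ (i mod c, k2) *
      (C $$ (k1, j div f) * E $$ (k2, j mod f)))"
    by (subst sum_pair) (auto intro!: sum.cong)
  also have "\<dots> = (\<Sum>k1<b. A $$ (i div c, k1) * C $$ (k1, j div f)) * (\<Sum>k2<d. B $$ (i mod c, k2) * E $$ (k2, j mod f))"
    by (simp add: sum_product mult_ac)
  also have "\<dots> = kron (A*C) (B*E) $$ (i,j)"
    using A B C E i j bd by (simp add: scalar_prod_def atLeast0LessThan)
  finally show "(kron A B * kron C E) $$ (i,j) = kron (A*C) (B*E) $$ (i,j)" .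
qed (use A B C E in auto)

lemma adj_kron: "adj (kron A B) = kron (adj A) (adj B)"
proof (rule eq_matI)
  fix i j assume ij: "i < dim_row (kron (adj A) (adj B))" "j < dim_col (kron (adj A) (adj B))"
  then have i: "i < dim_col A * dim_col B" and j: "j < dim_row A * dim_row B" by auto
  show "adj (kron A B) $$ (i,j) = kron (adj A) (adj B) $$ (i,j)"
    using i j div_bound[OF i] mod_bound[OF i] div_bound[OF j] mod_bound[OF j] by simp
qed auto

definition dg :: "nat \<Rightarrow> (nat \<Rightarrow> complex) \<Rightarrow> complex mat" where
  "dg n a = mat n n (\<lambda>(i,j). if i = j then a i else 0)"

lemma dg_carrier[simp]: "dg n a \<in> carrier_mat n n" by (simp add: dg_def)
lemma dg_dims[simp]: "dim_row (dg n a) = n" "dim_col (dg n a) = n" by (simp_all add: dg_def)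
lemma dg_index[simp]: "i < n \<Longrightarrow> j < n \<Longrightarrow> dg n a $$ (i,j) = (if i = j then a i else 0)"
  by (simp add: dg_def)

lemma one_dg: "1\<^sub>m n = dg n (\<lambda>_. 1)"
  by (rule eq_matI) auto

lemma kron_dg: "kron (dg D a) (dg D b) = dg (D*D) (\<lambda>k. a (k div D) * b (k mod D))"
proof (rule eq_matI)
  fix i j assume ij: "i < dim_row (dg (D*D) (\<lambda>k. a (k div D) * b (k mod D)))" "j < dim_col (dg (D*D) (\<lambda>k. a (k div D) * b (k mod D)))"
  then have i: "i < D*D" and j: "j < D*D" by auto
  have "(i div D = j div D \<and> i mod D = j mod D) = (i = j)"
    by (metis div_mult_mod_eq)
  then show "kron (dg D a) (dg D b) $$ (i,j) = dg (D*D) (\<lambda>k. a (k div D) * b (k mod D)) $$ (i,j)"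
    using i j div_bound[OF i] mod_bound[OF i] div_bound[OF j] mod_bound[OF j] by auto
qed auto

lemma adj_dg: "(\<And>k. k < n \<Longrightarrow> cnj (a k) = a k) \<Longrightarrow> adj (dg n a) = dg n a"
  by (rule eq_matI) auto

lemma dg_mult_trace: assumes "R \<in> carrier_mat n n"
  shows "mtrace (dg n a * R) = (\<Sum>k<n. a k * R $$ (k,k))"
proof -
  have e: "(dg n a * R) $$ (k,k) = a k * R $$ (k,k)" if k: "k < n" for k
  proof -
    define f where "f = (\<lambda>i. (if k = i then a k else 0) * R $$ (i, k))"
    have "(dg n a * R) $$ (k,k) = (\<Sum>i<n. f i)"
      using assms k by (auto simp: scalar_prod_def atLeast0LessThan f_def intro!: sum.cong)
    also have "\<dots> = f k + (\<Sum>i\<in>{..<n}-{k}. f i)" by (rule sum.remove) (auto simp: k)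
    also have "(\<Sum>i\<in>{..<n}-{k}. f i) = 0" by (rule sum.neutral) (auto simp: f_def)
    finally show ?thesis by (simp add: f_def)
  qed
  show ?thesis unfolding mtrace_def using e by simp
qed


lemma sum_single: assumes "k < (n::nat)" "\<And>i. i < n \<Longrightarrow> i \<noteq> k \<Longrightarrow> f i = 0"
  shows "(\<Sum>i<n. f i) = f k"
proof -
  have "(\<Sum>i<n. f i) = f k + (\<Sum>i\<in>{..<n}-{k}. f i)" by (rule sum.remove) (auto simp: assms)
  also have "(\<Sum>i\<in>{..<n}-{k}. f i) = 0" by (rule sum.neutral) (auto simp: assms)
  finally show ?thesis by simp
qed

definition sg :: "nat \<Rightarrow> nat \<Rightarrow> nat" where "sg D k = (k mod D) * D + k div D"

lemma sg_props: assumes k: "k < D*D"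
  shows "sg D k < D*D" "sg D k div D = k mod D" "sg D k mod D = k div D" "sg D (sg D k) = k"
proof -
  have D: "D > 0" using k by (cases D) auto
  have d: "k div D < D" using div_bound[OF k] .
  have m: "k mod D < D" using D by simp
  have "(k mod D)*D + k div D < (k mod D)*D + D" using d by simp
  also have "\<dots> = (Suc (k mod D)) * D" by simp
  also have "\<dots> \<le> D * D" using m by (intro mult_right_mono) auto
  finally show "sg D k < D*D" unfolding sg_def .
  show sd: "sg D k div D = k mod D" unfolding sg_def using d D by simp
  show sm: "sg D k mod D = k div D" unfolding sg_def using d D by simp
  show "sg D (sg D k) = k" unfolding sg_def[of D "sg D k"] sd sm by simp
qed

lemma sg_pair: "j < D \<Longrightarrow> sg D (i*D+j) = j*D+i"
  by (simp add: sg_def)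

lemma sg_eq_iff: "i < D*D \<Longrightarrow> j < D*D \<Longrightarrow> (j = sg D i) = (i = sg D j)"
  using sg_props by metis

lemma swap_dims[simp]: "dim_row (swap_op D) = D*D" "dim_col (swap_op D) = D*D"
  by (simp_all add: swap_op_def)

lemma swap_carrier[simp]: "swap_op D \<in> carrier_mat (D*D) (D*D)"
  by (metis carrier_matI swap_dims)

lemma swap_index: "i < D*D \<Longrightarrow> j < D*D \<Longrightarrow> swap_op D $$ (i,j) = (if j = sg D i then 1 else 0)"
  by (simp add: swap_op_def sg_def)

lemma swap_mult_left: assumes M: "M \<in> carrier_mat (D*D) n" and i: "i < D*D" and j: "j < n"
  shows "(swap_op D * M) $$ (i,j) = M $$ (sg D i, j)"
proof -
  have "(swap_op D * M) $$ (i,j) = (\<Sum>l<D*D. swap_op D $$ (i,l) * M $$ (l,j))"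
    using M i j by (auto simp: scalar_prod_def atLeast0LessThan intro!: sum.cong)
  also have "\<dots> = swap_op D $$ (i, sg D i) * M $$ (sg D i, j)"
    by (rule sum_single) (use sg_props[OF i] i in \<open>auto simp: swap_index\<close>)
  finally show ?thesis using sg_props[OF i] i by (simp add: swap_index)
qed

lemma swap_mult_right: assumes M: "M \<in> carrier_mat n (D*D)" and i: "i < n" and j: "j < D*D"
  shows "(M * swap_op D) $$ (i,j) = M $$ (i, sg D j)"
proof -
  have "(M * swap_op D) $$ (i,j) = (\<Sum>l<D*D. M $$ (i,l) * swap_op D $$ (l,j))"
    using M i j by (auto simp: scalar_prod_def atLeast0LessThan intro!: sum.cong)
  also have "\<dots> = M $$ (i, sg D j) * swap_op D $$ (sg D j, j)"
    by (rule sum_single) (use sg_props[OF j] j sg_eq_iff in \<open>auto simp: swap_index\<close>)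
  finally show ?thesis using sg_props[OF j] j by (simp add: swap_index)
qed

lemma swap_conj: assumes M: "M \<in> carrier_mat (D*D) (D*D)" and i: "i < D*D" and j: "j < D*D"
  shows "(swap_op D * M * swap_op D) $$ (i,j) = M $$ (sg D i, sg D j)"
proof -
  have SM: "swap_op D * M \<in> carrier_mat (D*D) (D*D)" using mult_carrier_mat[OF swap_carrier M] .
  show ?thesis
    using swap_mult_right[OF SM i j] swap_mult_left[OF M i sg_props(1)[OF j]] by simp
qed

lemma adj_swap[simp]: "adj (swap_op D) = swap_op D"
proof (rule eq_matI)
  fix i j assume "i < dim_row (swap_op D)" "j < dim_col (swap_op D)"
  then have ij: "i < D*D" "j < D*D" by auto
  show "adj (swap_op D) $$ (i,j) = swap_op D $$ (i,j)"
    using ij sg_eq_iff[OF ij] by (simp add: swap_index)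
qed auto

lemma swap_swap: "swap_op D * swap_op D = 1\<^sub>m (D*D)"
proof (rule eq_matI)
  fix i j assume "i < dim_row (1\<^sub>m (D*D))" "j < dim_col (1\<^sub>m (D*D))"
  then have ij: "i < D*D" "j < D*D" by auto
  show "(swap_op D * swap_op D) $$ (i,j) = 1\<^sub>m (D*D) $$ (i,j)"
    using swap_mult_left[OF swap_carrier ij] ij sg_props[OF ij(1)] by (auto simp: swap_index)
qed auto

lemma swap_kron: assumes A: "A \<in> carrier_mat D D" and B: "B \<in> carrier_mat D D"
  shows "swap_op D * kron A B * swap_op D = kron B A"
proof (rule eq_matI)
  fix i j assume "i < dim_row (kron B A)" "j < dim_col (kron B A)"
  then have ij: "i < D*D" "j < D*D" using A B by auto
  have K: "kron A B \<in> carrier_mat (D*D) (D*D)" using A B by simp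
  show "(swap_op D * kron A B * swap_op D) $$ (i,j) = kron B A $$ (i,j)"
    using swap_conj[OF K ij] sg_props[OF ij(1)] sg_props[OF ij(2)] A B ij by simp
qed (use A B in auto)

lemma swap_dg: assumes "\<And>k. k < D*D \<Longrightarrow> d (sg D k) = d k"
  shows "swap_op D * dg (D*D) d * swap_op D = dg (D*D) d"
proof (rule eq_matI)
  fix i j assume "i < dim_row (dg (D*D) d)" "j < dim_col (dg (D*D) d)"
  then have ij: "i < D*D" "j < D*D" by auto
  have "(sg D i = sg D j) = (i = j)" using sg_props[OF ij(1)] sg_props[OF ij(2)] by metis
  then show "(swap_op D * dg (D*D) d * swap_op D) $$ (i,j) = dg (D*D) d $$ (i,j)"
    using swap_conj[OF dg_carrier ij] sg_props[OF ij(1)] sg_props[OF ij(2)] ij assms by simp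
qed auto


context
  fixes N :: nat and W :: "complex mat"
  assumes W: "W \<in> carrier_mat N N" "adj W * W = 1\<^sub>m N" "W * adj W = 1\<^sub>m N"
begin

lemma aW: "adj W \<in> carrier_mat N N" using W(1) by simp

lemma trace_red: assumes X: "X \<in> carrier_mat N N" and K: "K \<in> carrier_mat N N"
  and XW: "X * W = W * K" and r: "\<rho> \<in> carrier_mat N N"
  shows "mtrace (X * \<rho>) = mtrace (K * (adj W * \<rho> * W))"
proof -
  have "X = X * (W * adj W)" using X W by simp
  also have "\<dots> = (X * W) * adj W" using assoc_mult_mat[OF X W(1) aW] by simp
  also have "\<dots> = W * (K * adj W)" unfolding XW using assoc_mult_mat[OF W(1) K aW] by simp
  finally have Xe: "X = W * (K * adj W)" .
  have KW: "K * adj W \<in> carrier_mat N N" using K aW by simp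
  have "mtrace (X * \<rho>) = mtrace (W * (K * adj W * \<rho>))"
    unfolding Xe using assoc_mult_mat[OF W(1) KW r] by simp
  also have "\<dots> = mtrace ((K * adj W * \<rho>) * W)"
    by (rule mtrace_comm[OF W(1)]) (use KW r in simp)
  also have "(K * adj W * \<rho>) * W = K * (adj W * \<rho> * W)"
    using assoc_mult_mat[OF K aW r] assoc_mult_mat[OF K mult_carrier_mat[OF aW r] W(1)] by simp
  finally show ?thesis .
qed

lemma R_carrier: "\<rho> \<in> carrier_mat N N \<Longrightarrow> adj W * \<rho> * W \<in> carrier_mat N N"
  using mult_carrier_mat[OF mult_carrier_mat[OF aW] W(1)] by blast

lemma R_diag: assumes r: "\<rho> \<in> carrier_mat N N" and k: "k < N"
  shows "(adj W * \<rho> * W) $$ (k,k) = (\<rho> *\<^sub>v col W k) \<bullet>c col W k"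
proof -
  have "(adj W * \<rho> * W) = adj W * (\<rho> * W)" using assoc_mult_mat[OF aW r W(1)] .
  then have "(adj W * \<rho> * W) $$ (k,k) = row (adj W) k \<bullet> col (\<rho> * W) k"
    using k W(1) r by simp
  also have "col (\<rho> * W) k = \<rho> *\<^sub>v col W k" using col_mult2[OF r W(1) k] .
  also have "row (adj W) k \<bullet> (\<rho> *\<^sub>v col W k) = (\<Sum>i<N. cnj (W $$ (i,k)) * (\<rho> *\<^sub>v col W k) $ i)"
    using k W(1) r by (auto simp: scalar_prod_def atLeast0LessThan intro!: sum.cong)
  also have "\<dots> = (\<rho> *\<^sub>v col W k) \<bullet>c col W k"
    using k W(1) r by (subst cscalar_sum[of _ N]) (auto simp: mult.commute intro!: sum.cong)
  finally show ?thesis .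
qed

lemma R_trace: assumes r: "\<rho> \<in> carrier_mat N N"
  shows "mtrace (adj W * \<rho> * W) = mtrace \<rho>"
proof -
  have "mtrace (adj W * \<rho> * W) = mtrace (W * (adj W * \<rho>))"
    by (rule mtrace_comm) (use r W(1) mult_carrier_mat[OF aW r] in simp_all)
  also have "W * (adj W * \<rho>) = \<rho>"
    using assoc_mult_mat[OF W(1) aW r, symmetric] W(3) r by simp
  finally show ?thesis .
qed

lemma R_of_dg: "adj W * (W * dg N d * adj W) * W = dg N d"
proof -
  have c: "W * dg N d \<in> carrier_mat N N" using W(1) by simp
  have "adj W * (W * dg N d * adj W) * W = (adj W * W) * dg N d * (adj W * W)"
    using assoc_mult_mat[OF aW c aW] assoc_mult_mat[OF aW W(1) dg_carrier]
      assoc_mult_mat[OF aW mult_carrier_mat[OF c aW] W(1)] assoc_mult_mat[OF c aW W(1)]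
      assoc_mult_mat[OF mult_carrier_mat[OF aW W(1)] dg_carrier mult_carrier_mat[OF aW W(1)]]
      assoc_mult_mat[OF aW W(1) mult_carrier_mat[OF dg_carrier mult_carrier_mat[OF aW W(1)]]]
      assoc_mult_mat[OF W(1) dg_carrier mult_carrier_mat[OF aW W(1)]]
      assoc_mult_mat[OF dg_carrier aW W(1)]
    by simp
  also have "\<dots> = dg N d" using W(2) by simp
  finally show ?thesis .
qed

end


context fixes N :: nat begin
lemma sq_assoc: "A \<in> carrier_mat N N \<Longrightarrow> B \<in> carrier_mat N N \<Longrightarrow> C \<in> carrier_mat N N \<Longrightarrow> A * B * C = A * (B * C)"
  by (rule assoc_mult_mat)
lemma sq_mult: "A \<in> carrier_mat N N \<Longrightarrow> B \<in> carrier_mat N N \<Longrightarrow> A * B \<in> carrier_mat N N"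
  by (rule mult_carrier_mat)
lemma sq_mv_assoc: "A \<in> carrier_mat N N \<Longrightarrow> B \<in> carrier_mat N N \<Longrightarrow> v \<in> carrier_vec N \<Longrightarrow> (A * B) *\<^sub>v v = A *\<^sub>v (B *\<^sub>v v)"
  by (rule assoc_mult_mat_vec)
lemma sq_mv_carrier: "A \<in> carrier_mat N N \<Longrightarrow> v \<in> carrier_vec N \<Longrightarrow> A *\<^sub>v v \<in> carrier_vec N"
  by (rule mult_mat_vec_carrier)
lemma test_assoc: assumes "A \<in> carrier_mat N N" "B \<in> carrier_mat N N" "C \<in> carrier_mat N N" "E \<in> carrier_mat N N"
  shows "(A * B) * (C * E) = A * (B * C) * E"
  using assms by (simp add: sq_assoc sq_mult del: assoc_mult_mat)
end


lemmas sqs = sq_assoc sq_mult sq_mv_assoc sq_mv_carrier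

context
  fixes D :: nat and W :: "complex mat"
  assumes W: "W \<in> carrier_mat (D*D) (D*D)" "adj W * W = 1\<^sub>m (D*D)" "W * adj W = 1\<^sub>m (D*D)"
  and SW: "swap_op D * W = W * swap_op D"
begin

lemma aW': "adj W \<in> carrier_mat (D*D) (D*D)" using W(1) by simp

lemma aWS: "adj W * swap_op D = swap_op D * adj W"
proof -
  have "adj (swap_op D * W) = adj (W * swap_op D)" using SW by simp
  then show ?thesis using adj_mult[OF swap_carrier W(1)] adj_mult[OF W(1) swap_carrier] by simp
qed

lemma SWX: "X \<in> carrier_mat (D*D) n \<Longrightarrow> swap_op D * (W * X) = W * (swap_op D * X)"
  using assoc_mult_mat[OF swap_carrier W(1), of X] assoc_mult_mat[OF W(1) swap_carrier, of X] SW by simp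

lemma R_swap: assumes r: "\<rho> \<in> carrier_mat (D*D) (D*D)" and inv: "swap_op D * \<rho> * adj (swap_op D) = \<rho>"
  shows "swap_op D * (adj W * \<rho> * W) * swap_op D = adj W * \<rho> * W"
proof -
  note c = W(1) aW' swap_carrier r
  have "swap_op D * (adj W * \<rho> * W) * swap_op D = (swap_op D * adj W) * \<rho> * (W * swap_op D)"
    using c by (simp add: sqs[where N="D*D"] del: assoc_mult_mat assoc_mult_mat_vec)
  also have "\<dots> = adj W * (swap_op D * \<rho> * swap_op D) * W"
    unfolding aWS[symmetric] SW[symmetric] using c by (simp add: sqs[where N="D*D"] del: assoc_mult_mat assoc_mult_mat_vec)
  also have "swap_op D * \<rho> * swap_op D = \<rho>" using inv by simp
  finally show ?thesis .
qed

lemma dg_state: fixes d :: "nat \<Rightarrow> real"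
  assumes d0: "\<And>k. k < D*D \<Longrightarrow> d k \<ge> 0" and d1: "(\<Sum>k<D*D. d k) = 1"
  and dsym: "\<And>k. k < D*D \<Longrightarrow> d (sg D k) = d k"
  defines "\<rho> \<equiv> W * dg (D*D) (\<lambda>k. complex_of_real (d k)) * adj W"
  shows "density_op (D*D) \<rho>" "perm_invariant2 D \<rho>"
proof -
  define G where "G = dg (D*D) (\<lambda>k. complex_of_real (d k))"
  have G: "G \<in> carrier_mat (D*D) (D*D)" unfolding G_def by simp
  note c = W(1) aW' swap_carrier G
  have r: "\<rho> \<in> carrier_mat (D*D) (D*D)" unfolding \<rho>_def G_def[symmetric] using c
    by (simp add: sqs[where N="D*D"] del: assoc_mult_mat assoc_mult_mat_vec)
  have aG: "adj G = G" unfolding G_def by (rule adj_dg) simp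
  have herm: "adj \<rho> = \<rho>"
    unfolding \<rho>_def G_def[symmetric] using adj_mult[OF mult_carrier_mat[OF W(1) G] aW'] adj_mult[OF W(1) G] aG
      sq_assoc[where N="D*D", OF W(1) G aW']
    by simp
  have quad: "0 \<le> Re ((\<rho> *\<^sub>v v) \<bullet>c v)" if v: "v \<in> carrier_vec (D*D)" for v
  proof -
    define y where "y = adj W *\<^sub>v v"
    have y: "y \<in> carrier_vec (D*D)" unfolding y_def using aW' v by simp
    have "\<rho> *\<^sub>v v = W *\<^sub>v (G *\<^sub>v y)" unfolding \<rho>_def G_def[symmetric] y_def
      using c v by (simp add: sqs[where N="D*D"] del: assoc_mult_mat assoc_mult_mat_vec)
    then have "(\<rho> *\<^sub>v v) \<bullet>c v = (G *\<^sub>v y) \<bullet>c y"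
      using cscalar_adj[OF W(1) mult_mat_vec_carrier[OF G y] v] unfolding y_def by simp
    also have "\<dots> = (\<Sum>k<D*D. complex_of_real (d k) * (y $ k * cnj (y $ k)))"
    proof -
      have Gy: "(G *\<^sub>v y) $ k = complex_of_real (d k) * y $ k" if k: "k < D*D" for k
      proof -
        have "(G *\<^sub>v y) $ k = (\<Sum>i<D*D. G $$ (k,i) * y $ i)"
          using G y k by (auto simp: scalar_prod_def atLeast0LessThan intro!: sum.cong)
        also have "\<dots> = G $$ (k,k) * y $ k"
          by (rule sum_single) (use k in \<open>auto simp: G_def\<close>)
        finally show ?thesis using k by (simp add: G_def)
      qed
      show ?thesis using Gy by (subst cscalar_sum[OF mult_mat_vec_carrier[OF G y] y]) (simp add: mult.assoc)
    qed
    finally have "Re ((\<rho> *\<^sub>v v) \<bullet>c v) = (\<Sum>k<D*D. d k * ((Re (y $ k))^2 + (Im (y $ k))^2))"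
      by (simp add: complex_mult_cnj)
    also have "\<dots> \<ge> 0" using d0 by (intro sum_nonneg) simp
    finally show ?thesis .
  qed
  have tr: "mtrace \<rho> = 1"
  proof -
    have "mtrace \<rho> = mtrace (adj W * \<rho> * W)" using R_trace[OF W r] by simp
    also have "adj W * \<rho> * W = G" unfolding \<rho>_def G_def using R_of_dg[OF W] by simp
    also have "mtrace G = (\<Sum>k<D*D. complex_of_real (d k))" unfolding G_def mtrace_def by simp
    also have "\<dots> = 1" using d1 by (metis of_real_1 of_real_sum)
    finally show ?thesis .
  qed
  show "density_op (D*D) \<rho>"
    unfolding density_op_def psd_def hermitian_mat_def using r herm quad tr by auto
  have "swap_op D * \<rho> * adj (swap_op D) = W * (swap_op D * G * swap_op D) * adj W"
    unfolding \<rho>_def G_def[symmetric] adj_swap using c SW aWS SWX[of "G * (swap_op D * adj W)" "D*D"]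
    by (simp add: sqs[where N="D*D"] del: assoc_mult_mat assoc_mult_mat_vec)
  also have "swap_op D * G * swap_op D = G" unfolding G_def by (rule swap_dg) (use dsym in simp)
  finally show "perm_invariant2 D \<rho>" unfolding perm_invariant2_def \<rho>_def G_def .
qed

end


lemma sum_sg: "(\<Sum>k<D*D. \<phi> (sg D k)) = (\<Sum>k<D*D. \<phi> k)"
  by (rule sum.reindex_bij_witness[where i="sg D" and j="sg D"]) (auto simp: sg_props)

lemma lp_line: fixes r lam g :: "nat \<Rightarrow> real"
  assumes r0: "\<And>k. k < D*D \<Longrightarrow> r k \<ge> 0" and r1: "(\<Sum>k<D*D. r k) = 1"
  and rs: "\<And>k. k < D*D \<Longrightarrow> r (sg D k) = r k"
  and pt: "\<And>i j. i < D \<Longrightarrow> j < D \<Longrightarrow> c0 * (lam i * g j + lam j * g i) \<ge> a * (lam i + lam j) + 2 * b"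
  shows "c0 * (\<Sum>k<D*D. lam (k div D) * g (k mod D) * r k) \<ge> a * (\<Sum>k<D*D. lam (k div D) * r k) + b"
proof -
  have s1: "(\<Sum>k<D*D. lam (k div D) * g (k mod D) * r k) = (\<Sum>k<D*D. lam (k mod D) * g (k div D) * r k)"
    using sum_sg[of "\<lambda>k. lam (k div D) * g (k mod D) * r k" D] by (auto simp: sg_props rs intro!: sum.cong)
  have s2: "(\<Sum>k<D*D. lam (k div D) * r k) = (\<Sum>k<D*D. lam (k mod D) * r k)"
    using sum_sg[of "\<lambda>k. lam (k div D) * r k" D] by (auto simp: sg_props rs intro!: sum.cong)
  have "0 \<le> (\<Sum>k<D*D. r k * (c0 * (lam (k div D) * g (k mod D) + lam (k mod D) * g (k div D))
       - (a * (lam (k div D) + lam (k mod D)) + 2 * b)))"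
    using r0 pt div_bound mod_bound by (intro sum_nonneg mult_nonneg_nonneg) auto
  also have "\<dots> = c0 * (\<Sum>k<D*D. lam (k div D) * g (k mod D) * r k) + c0 * (\<Sum>k<D*D. lam (k mod D) * g (k div D) * r k)
     - a * (\<Sum>k<D*D. lam (k div D) * r k) - a * (\<Sum>k<D*D. lam (k mod D) * r k) - 2 * b * (\<Sum>k<D*D. r k)"
    by (simp add: sum_subtractf sum.distrib sum_distrib_left algebra_simps)
  finally show ?thesis using s1 s2 r1 by simp
qed

lemma pt_L0: assumes "0 \<le> \<tau>" "x = 1 \<or> (\<tau> \<le> x \<and> x \<le> \<beta>)" "y = 1 \<or> (\<tau> \<le> y \<and> y \<le> \<beta>)"
  shows "1 * (x * (if y = 1 then 1 else 0) + y * (if x = 1 then 1 else 0)) \<ge> (0::real) * (x + y) + 2 * 0"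
  using assms by auto

lemma pt_L1: fixes x y \<beta> \<tau> :: real
  assumes t: "0 \<le> \<tau>" "\<tau> \<le> \<beta>" "\<beta> < 1" "\<beta> \<ge> 1/2" and x: "x = 1 \<or> (\<tau> \<le> x \<and> x \<le> \<beta>)" and y: "y = 1 \<or> (\<tau> \<le> y \<and> y \<le> \<beta>)"
  shows "(1 - \<beta>) * (x * (if y = 1 then 1 else 0) + y * (if x = 1 then 1 else 0)) \<ge> \<beta> * (x + y) + 2 * (- (\<beta> * \<beta>))"
proof -
  have A: "(1 - 2*\<beta>) * (z - \<beta>) \<ge> 0" if "z \<le> \<beta>" for z using t that by (intro mult_nonpos_nonpos) auto
  have B: "\<beta> * (2*\<beta> - z - w) \<ge> 0" if "z \<le> \<beta>" "w \<le> \<beta>" for z w using t that by (intro mult_nonneg_nonneg) auto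
  have C: "(1-\<beta>)*(1-\<beta>) \<ge> 0" by simp
  show ?thesis
  proof (cases "x = 1")
    case True
    then show ?thesis
    proof (cases "y = 1")
      case True
      then show ?thesis using \<open>x = 1\<close> C by (simp add: algebra_simps power2_eq_square)
    next
      case False
      then have "y \<le> \<beta>" using y by auto
      then show ?thesis using A[of y] \<open>x = 1\<close> False by (simp add: algebra_simps power2_eq_square)
    qed
  next
    case False
    then have xb: "x \<le> \<beta>" using x by auto
    show ?thesis
    proof (cases "y = 1")
      case True
      then show ?thesis using A[OF xb] False by (simp add: algebra_simps power2_eq_square)
    next
      case yF: False
      then have "y \<le> \<beta>" using y by auto
      then have yb: "y \<le> \<beta>" .
      show ?thesis using B[OF xb yb] False yF by (simp add: algebra_simps power2_eq_square)
    qed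
  qed
qed

lemma pt_L2: fixes x y \<beta> \<tau> :: real
  assumes t: "0 \<le> \<tau>" "\<tau> \<le> \<beta>" "\<beta> < 1" and x: "x = 1 \<or> (\<tau> \<le> x \<and> x \<le> \<beta>)" and y: "y = 1 \<or> (\<tau> \<le> y \<and> y \<le> \<beta>)"
  shows "(1 - \<beta>) * (x * (if y = 1 then 1 else 0) + y * (if x = 1 then 1 else 0)) \<ge> (2 - \<beta>) * (x + y) + 2 * (- 1)"
proof -
  have B: "(2 - \<beta>) * (z + w) \<le> (2 - \<beta>) * (2 * \<beta>)" if "z \<le> \<beta>" "w \<le> \<beta>" for z w using t that by (intro mult_left_mono) auto
  have C: "(1-\<beta>)*(1-\<beta>) \<ge> 0" by simp
  show ?thesis
  proof (cases "x = 1")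
    case True
    then show ?thesis
    proof (cases "y = 1")
      case True
      then show ?thesis using \<open>x = 1\<close> by (simp add: algebra_simps)
    next
      case False
      then have "y \<le> \<beta>" using y by auto
      then show ?thesis using \<open>x = 1\<close> False by (simp add: algebra_simps)
    qed
  next
    case False
    then have xb: "x \<le> \<beta>" using x by auto
    show ?thesis
    proof (cases "y = 1")
      case True
      then show ?thesis using xb False by (simp add: algebra_simps)
    next
      case yF: False
      then have "y \<le> \<beta>" using y by auto
      then have yb: "y \<le> \<beta>" .
      show ?thesis using B[OF xb yb] C False yF by (simp add: algebra_simps)
    qed
  qed
qed

lemma pt_L1': fixes x y \<beta> \<tau> :: real
  assumes t: "0 \<le> \<tau>" "\<tau> \<le> \<beta>" "\<beta> < 1/2" and x: "x = 1 \<or> (\<tau> \<le> x \<and> x \<le> \<beta>)" and y: "y = 1 \<or> (\<tau> \<le> y \<and> y \<le> \<beta>)"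
  shows "(1 + \<tau> - 2*\<beta>) * (x * (if y = 1 then 1 else 0) + y * (if x = 1 then 1 else 0)) \<ge> \<tau> * (x + y) + 2 * (- \<tau> * \<beta>)"
proof -
  have A: "(1 - 2*\<beta>) * (z - \<tau>) \<ge> 0" if "\<tau> \<le> z" for z using t that by (intro mult_nonneg_nonneg) auto
  have B: "\<tau> * (2*\<beta> - z - w) \<ge> 0" if "z \<le> \<beta>" "w \<le> \<beta>" for z w using t that by (intro mult_nonneg_nonneg) auto
  have C: "0 \<le> \<beta> * \<tau>" using t by simp
  show ?thesis
  proof (cases "x = 1")
    case True
    then show ?thesis
    proof (cases "y = 1")
      case True
      have C2: "0 \<le> \<beta> * (\<tau> * 2)" using t by simp
      show ?thesis using \<open>x = 1\<close> True apply (simp add: algebra_simps) using C2 t by linarith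
    next
      case False
      then have "\<tau> \<le> y" using y by auto
      then show ?thesis using A[of y] \<open>x = 1\<close> False by (simp add: algebra_simps)
    qed
  next
    case False
    then have xb: "x \<le> \<beta>" "\<tau> \<le> x" using x by auto
    show ?thesis
    proof (cases "y = 1")
      case True
      then show ?thesis using A[OF xb(2)] False by (simp add: algebra_simps)
    next
      case yF: False
      then have "y \<le> \<beta>" using y by auto
      then have yb: "y \<le> \<beta>" .
      show ?thesis using B[OF xb(1) yb] False yF by (simp add: algebra_simps)
    qed
  qed
qed

lemma pt_L2': fixes x y \<beta> \<tau> :: real
  assumes t: "0 \<le> \<tau>" "\<tau> \<le> \<beta>" "\<beta> < 1/2" and x: "x = 1 \<or> (\<tau> \<le> x \<and> x \<le> \<beta>)" and y: "y = 1 \<or> (\<tau> \<le> y \<and> y \<le> \<beta>)"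
  shows "1 * (x * (if y = 1 then 1 else 0) + y * (if x = 1 then 1 else 0)) \<ge> 1 * (x + y) + 2 * (- 1/2)"
  using assms by auto




lemma final_real: fixes F :: "real set" and lam :: "nat \<Rightarrow> real" and \<beta> \<tau> \<delta> :: real
  assumes lamc: "\<And>i. i < D \<Longrightarrow> lam i = 1 \<or> (\<tau> \<le> lam i \<and> lam i \<le> \<beta>)"
  and t: "0 \<le> \<tau>" "\<tau> \<le> \<beta>" "\<beta> < 1" and d: "0 \<le> \<delta>" "\<delta> \<le> 1"
  and LB: "\<And>y. y \<in> F \<Longrightarrow> \<exists>r. (\<forall>k<D*D. r k \<ge> 0) \<and> (\<Sum>k<D*D. r k) = 1 \<and> (\<forall>k<D*D. r (sg D k) = r k) \<and>
     y = (\<Sum>k<D*D. lam (k div D) * (if lam (k mod D) = 1 then 1 else 0) * r k) \<and> \<delta> \<le> (\<Sum>k<D*D. lam (k div D) * r k)"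
  and UB: "\<And>w1 w2 w3 w4. 0 \<le> w1 \<Longrightarrow> 0 \<le> w2 \<Longrightarrow> 0 \<le> w3 \<Longrightarrow> 0 \<le> w4 \<Longrightarrow> w1 + w2 + w3 + w4 = 1 \<Longrightarrow>
     \<delta> \<le> w1 * \<beta> + w2 * ((1 + \<beta>) / 2) + w3 * ((1 + \<tau>) / 2) + w4 \<Longrightarrow> w2 * (\<beta> / 2) + w3 * (\<tau> / 2) + w4 \<in> F"
  shows "(\<beta> \<ge> 1/2 \<longrightarrow> is_min F
           (if \<delta> \<le> \<beta> then 0
            else if \<delta> \<le> (1 + \<beta>) / 2 then \<beta> * (\<delta> - \<beta>) / (1 - \<beta>)
            else (\<delta> * (2 - \<beta>) - 1) / (1 - \<beta>))) \<and>
         (\<beta> < 1/2 \<longrightarrow> is_min F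
           (if \<delta> \<le> \<beta> then 0
            else if \<delta> \<le> (1 + \<tau>) / 2 then \<tau> * (\<delta> - \<beta>) / (1 + \<tau> - 2 * \<beta>)
            else if \<delta> \<le> (1 + \<beta>) / 2 then \<delta> - 1/2
            else (\<delta> * (2 - \<beta>) - 1) / (1 - \<beta>)))"
proof -
  define g where "g = (\<lambda>i. if lam i = 1 then (1::real) else 0)"
  have b1: "1 - \<beta> > 0" using t by simp
  have nz1: "1 - \<beta> \<noteq> 0" using t by simp
  define e where "e = 1 - \<beta>"
  have e: "e > 0" "\<beta> = 1 - e" using t unfolding e_def by auto
  have lines: "0 \<le> y \<and> (\<beta> \<ge> 1/2 \<longrightarrow> (1 - \<beta>) * y \<ge> \<beta> * \<delta> - \<beta> * \<beta>) \<and> (1 - \<beta>) * y \<ge> (2 - \<beta>) * \<delta> - 1 \<and>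
     (\<beta> < 1/2 \<longrightarrow> (1 + \<tau> - 2*\<beta>) * y \<ge> \<tau> * \<delta> - \<tau> * \<beta> \<and> y \<ge> \<delta> - 1/2)" if y: "y \<in> F" for y
  proof -
    obtain r where r: "\<forall>k<D*D. r k \<ge> 0" "(\<Sum>k<D*D. r k) = 1" "\<forall>k<D*D. r (sg D k) = r k"
      "y = (\<Sum>k<D*D. lam (k div D) * g (k mod D) * r k)" "\<delta> \<le> (\<Sum>k<D*D. lam (k div D) * r k)"
      using LB[OF y] unfolding g_def by blast
    define p where "p = (\<Sum>k<D*D. lam (k div D) * r k)"
    have pd: "\<delta> \<le> p" using r(5) p_def by simp
    note lp = lp_line[of D r, OF _ r(2), where lam=lam and g=g, folded r(4) p_def]
    have L0: "1 * y \<ge> 0 * p + 0"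
    proof (rule lp)
      fix i j assume ij: "i < D" "j < D"
      have "0 \<le> lam i" "0 \<le> lam j" using lamc[OF ij(1)] lamc[OF ij(2)] t by auto
      then show "1 * (lam i * g j + lam j * g i) \<ge> 0 * (lam i + lam j) + 2 * 0"
        by (auto simp: g_def)
    qed (use r in auto)
    have L2: "(1 - \<beta>) * y \<ge> (2 - \<beta>) * p + (- 1)"
    proof (rule lp)
      fix i j assume ij: "i < D" "j < D"
      show "(1 - \<beta>) * (lam i * g j + lam j * g i) \<ge> (2 - \<beta>) * (lam i + lam j) + 2 * (- 1)"
        using pt_L2[OF t lamc[OF ij(1)] lamc[OF ij(2)]] unfolding g_def .
    qed (use r in auto)
    have L2d: "(2 - \<beta>) * p \<ge> (2 - \<beta>) * \<delta>" using pd t by (intro mult_left_mono) auto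
    have "(\<beta> \<ge> 1/2 \<longrightarrow> (1 - \<beta>) * y \<ge> \<beta> * \<delta> - \<beta> * \<beta>)"
    proof
      assume hb: "\<beta> \<ge> 1/2"
      have L1: "(1 - \<beta>) * y \<ge> \<beta> * p + (- (\<beta> * \<beta>))"
      proof (rule lp)
        fix i j assume ij: "i < D" "j < D"
        show "(1 - \<beta>) * (lam i * g j + lam j * g i) \<ge> \<beta> * (lam i + lam j) + 2 * (- (\<beta> * \<beta>))"
          using pt_L1[OF t hb lamc[OF ij(1)] lamc[OF ij(2)]] unfolding g_def .
      qed (use r in auto)
      have "\<beta> * p \<ge> \<beta> * \<delta>" using pd t hb by (intro mult_left_mono) auto
      then show "(1 - \<beta>) * y \<ge> \<beta> * \<delta> - \<beta> * \<beta>" using L1 by simp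
    qed
    moreover have "(\<beta> < 1/2 \<longrightarrow> (1 + \<tau> - 2*\<beta>) * y \<ge> \<tau> * \<delta> - \<tau> * \<beta> \<and> y \<ge> \<delta> - 1/2)"
    proof
      assume hb: "\<beta> < 1/2"
      have L1: "(1 + \<tau> - 2*\<beta>) * y \<ge> \<tau> * p + (- \<tau> * \<beta>)"
      proof (rule lp)
        fix i j assume ij: "i < D" "j < D"
        show "(1 + \<tau> - 2*\<beta>) * (lam i * g j + lam j * g i) \<ge> \<tau> * (lam i + lam j) + 2 * (- \<tau> * \<beta>)"
          using pt_L1'[OF t(1,2) hb lamc[OF ij(1)] lamc[OF ij(2)]] unfolding g_def .
      qed (use r in auto)
      have L2': "1 * y \<ge> 1 * p + (- 1/2)"
      proof (rule lp)
        fix i j assume ij: "i < D" "j < D"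
        show "1 * (lam i * g j + lam j * g i) \<ge> 1 * (lam i + lam j) + 2 * (- 1/2)"
          using pt_L2'[OF t(1,2) hb lamc[OF ij(1)] lamc[OF ij(2)]] unfolding g_def .
      qed (use r in auto)
      have "\<tau> * p \<ge> \<tau> * \<delta>" using pd t by (intro mult_left_mono) auto
      then show "(1 + \<tau> - 2*\<beta>) * y \<ge> \<tau> * \<delta> - \<tau> * \<beta> \<and> y \<ge> \<delta> - 1/2" using L1 L2' pd by simp
    qed
    ultimately show ?thesis using L0 L2 L2d by simp
  qed
  have mem: "v \<in> F" if "0 \<le> w1" "0 \<le> w2" "0 \<le> w3" "0 \<le> w4" "w1 + w2 + w3 + w4 = 1"
     "\<delta> \<le> w1 * \<beta> + w2 * ((1 + \<beta>) / 2) + w3 * ((1 + \<tau>) / 2) + w4" "v = w2 * (\<beta> / 2) + w3 * (\<tau> / 2) + w4"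
     for v w1 w2 w3 w4 using UB[OF that(1-6)] that(7) by simp
  have m0: "0 \<in> F" if "\<delta> \<le> \<beta>" using mem[of 1 0 0 0 0] that by simp
  have m4: "(\<delta> * (2 - \<beta>) - 1) / (1 - \<beta>) \<in> F" if "\<delta> > (1 + \<beta>) / 2"
  proof -
    define s where "s = (2 * \<delta> - 1 - \<beta>) / (1 - \<beta>)"
    have s: "0 \<le> s" "s \<le> 1" using that b1 d unfolding s_def by (auto simp: field_simps)
    show ?thesis
    proof (rule mem[of 0 "1 - s" 0 s])
      have "0 * \<beta> + (1 - s) * ((1 + \<beta>) / 2) + 0 * ((1 + \<tau>) / 2) + s = \<delta>"
        using e unfolding s_def e(2) by (simp add: field_simps)
      then show "\<delta> \<le> 0 * \<beta> + (1 - s) * ((1 + \<beta>) / 2) + 0 * ((1 + \<tau>) / 2) + s" by simp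
      show "(\<delta> * (2 - \<beta>) - 1) / (1 - \<beta>) = (1 - s) * (\<beta> / 2) + 0 * (\<tau> / 2) + s"
        using e unfolding s_def e(2) by (simp add: field_simps)
    qed (use s in auto)
  qed
  show ?thesis
  proof (intro conjI impI)
    assume hb: "\<beta> \<ge> 1/2"
    show "is_min F (if \<delta> \<le> \<beta> then 0
            else if \<delta> \<le> (1 + \<beta>) / 2 then \<beta> * (\<delta> - \<beta>) / (1 - \<beta>)
            else (\<delta> * (2 - \<beta>) - 1) / (1 - \<beta>))"
      unfolding is_min_def
    proof (intro conjI ballI)
      show "(if \<delta> \<le> \<beta> then 0 else if \<delta> \<le> (1 + \<beta>) / 2 then \<beta> * (\<delta> - \<beta>) / (1 - \<beta>)
            else (\<delta> * (2 - \<beta>) - 1) / (1 - \<beta>)) \<in> F"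
      proof (cases "\<delta> \<le> \<beta>")
        case True then show ?thesis using m0 by simp
      next
        case nb: False
        show ?thesis
        proof (cases "\<delta> \<le> (1 + \<beta>) / 2")
          case True
          define s where "s = 2 * (\<delta> - \<beta>) / (1 - \<beta>)"
          have s: "0 \<le> s" "s \<le> 1" using True nb b1 unfolding s_def by (auto simp: field_simps)
          have "\<beta> * (\<delta> - \<beta>) / (1 - \<beta>) \<in> F"
          proof (rule mem[of "1 - s" s 0 0])
            have "(1 - s) * \<beta> + s * ((1 + \<beta>) / 2) + 0 * ((1 + \<tau>) / 2) + 0 = \<delta>"
              using e unfolding s_def e(2) by (simp add: field_simps)
            then show "\<delta> \<le> (1 - s) * \<beta> + s * ((1 + \<beta>) / 2) + 0 * ((1 + \<tau>) / 2) + 0" by simp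
            show "\<beta> * (\<delta> - \<beta>) / (1 - \<beta>) = s * (\<beta> / 2) + 0 * (\<tau> / 2) + 0"
              using e unfolding s_def e(2) by (simp add: field_simps)
          qed (use s in auto)
          then show ?thesis using True nb by simp
        next
          case False then show ?thesis using nb m4 by simp
        qed
      qed
    next
      fix y assume y: "y \<in> F"
      note l = lines[OF y]
      show "(if \<delta> \<le> \<beta> then 0 else if \<delta> \<le> (1 + \<beta>) / 2 then \<beta> * (\<delta> - \<beta>) / (1 - \<beta>)
            else (\<delta> * (2 - \<beta>) - 1) / (1 - \<beta>)) \<le> y"
        using l hb b1 by (auto simp: divide_le_eq algebra_simps)
    qed
  next
    assume hb: "\<beta> < 1/2"
    have q: "1 + \<tau> - 2 * \<beta> > 0" using hb t by simp
    define qq where "qq = 1 + \<tau> - 2 * \<beta>"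
    have qq: "qq > 0" "\<tau> = qq - 1 + 2 * \<beta>" using q unfolding qq_def by auto
    show "is_min F (if \<delta> \<le> \<beta> then 0
            else if \<delta> \<le> (1 + \<tau>) / 2 then \<tau> * (\<delta> - \<beta>) / (1 + \<tau> - 2 * \<beta>)
            else if \<delta> \<le> (1 + \<beta>) / 2 then \<delta> - 1/2
            else (\<delta> * (2 - \<beta>) - 1) / (1 - \<beta>))"
      unfolding is_min_def
    proof (intro conjI ballI)
      show "(if \<delta> \<le> \<beta> then 0
            else if \<delta> \<le> (1 + \<tau>) / 2 then \<tau> * (\<delta> - \<beta>) / (1 + \<tau> - 2 * \<beta>)
            else if \<delta> \<le> (1 + \<beta>) / 2 then \<delta> - 1/2
            else (\<delta> * (2 - \<beta>) - 1) / (1 - \<beta>)) \<in> F"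
      proof (cases "\<delta> \<le> \<beta>")
        case True then show ?thesis using m0 by simp
      next
        case nb: False
        show ?thesis
        proof (cases "\<delta> \<le> (1 + \<tau>) / 2")
          case True
          define s where "s = 2 * (\<delta> - \<beta>) / (1 + \<tau> - 2 * \<beta>)"
          have s: "0 \<le> s" "s \<le> 1" using True nb q unfolding s_def by (auto simp: field_simps)
          have "\<tau> * (\<delta> - \<beta>) / (1 + \<tau> - 2 * \<beta>) \<in> F"
          proof (rule mem[of "1 - s" 0 s 0])
            have "(1 - s) * \<beta> + 0 * ((1 + \<beta>) / 2) + s * ((1 + \<tau>) / 2) + 0 = \<delta>"
              using qq unfolding s_def qq(2) by (simp add: field_simps)
            then show "\<delta> \<le> (1 - s) * \<beta> + 0 * ((1 + \<beta>) / 2) + s * ((1 + \<tau>) / 2) + 0" by simp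
            show "\<tau> * (\<delta> - \<beta>) / (1 + \<tau> - 2 * \<beta>) = 0 * (\<beta> / 2) + s * (\<tau> / 2) + 0"
              using qq unfolding s_def qq(2) by (simp add: field_simps)
          qed (use s in auto)
          then show ?thesis using True nb by simp
        next
          case nt: False
          show ?thesis
          proof (cases "\<delta> \<le> (1 + \<beta>) / 2")
            case True
            have bt: "\<beta> - \<tau> > 0" using True nt by simp
            define s where "s = (2 * \<delta> - 1 - \<tau>) / (\<beta> - \<tau>)"
            have s: "0 \<le> s" "s \<le> 1" using True nt bt unfolding s_def by (auto simp: field_simps)
            have "\<delta> - 1/2 \<in> F"
            proof (rule mem[of 0 s "1 - s" 0])
              define ww where "ww = \<beta> - \<tau>"
              have ww: "ww > 0" "\<beta> = \<tau> + ww" using bt unfolding ww_def by auto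
              have "0 * \<beta> + s * ((1 + \<beta>) / 2) + (1 - s) * ((1 + \<tau>) / 2) + 0 = \<delta>"
                using ww unfolding s_def ww(2) by (simp add: field_simps)
              then show "\<delta> \<le> 0 * \<beta> + s * ((1 + \<beta>) / 2) + (1 - s) * ((1 + \<tau>) / 2) + 0" by simp
              show "\<delta> - 1/2 = s * (\<beta> / 2) + (1 - s) * (\<tau> / 2) + 0"
                using ww unfolding s_def ww(2) by (simp add: field_simps)
            qed (use s in auto)
            then show ?thesis using True nt nb by simp
          next
            case False then show ?thesis using nb nt m4 by simp
          qed
        qed
      qed
    next
      fix y assume y: "y \<in> F"
      note l = lines[OF y]
      show "(if \<delta> \<le> \<beta> then 0
            else if \<delta> \<le> (1 + \<tau>) / 2 then \<tau> * (\<delta> - \<beta>) / (1 + \<tau> - 2 * \<beta>)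
            else if \<delta> \<le> (1 + \<beta>) / 2 then \<delta> - 1/2
            else (\<delta> * (2 - \<beta>) - 1) / (1 - \<beta>)) \<le> y"
        using l hb b1 q by (auto simp: divide_le_eq algebra_simps)
    qed
  qed
qed



lemma mat_eq_cols_dg: assumes A: "A \<in> carrier_mat n n" and U: "U \<in> carrier_mat n n"
  and c: "\<And>j. j < n \<Longrightarrow> A *\<^sub>v col U j = a j \<cdot>\<^sub>v col U j"
  shows "A * U = U * dg n a"
proof (rule eq_matI)
  fix i j assume "i < dim_row (U * dg n a)" "j < dim_col (U * dg n a)"
  then have ij: "i < n" "j < n" using U by auto
  have "(A * U) $$ (i,j) = (A *\<^sub>v col U j) $ i" using A U ij by simp
  also have "\<dots> = a j * U $$ (i,j)" using c[OF ij(2)] U ij by simp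
  also have "\<dots> = (U * dg n a) $$ (i,j)"
  proof -
    have "(U * dg n a) $$ (i,j) = (\<Sum>l<n. U $$ (i,l) * dg n a $$ (l,j))"
      using U ij by (auto simp: scalar_prod_def atLeast0LessThan intro!: sum.cong)
    also have "\<dots> = U $$ (i,j) * dg n a $$ (j,j)"
      by (rule sum_single) (use ij in auto)
    finally show ?thesis using ij by simp
  qed
  finally show "(A * U) $$ (i,j) = (U * dg n a) $$ (i,j)" .
qed (use A U in auto)

lemma eig_index: assumes A: "A \<in> carrier_mat n n" and U: "U \<in> carrier_mat n n"
  and U1: "adj U * U = 1\<^sub>m n" and U2: "U * adj U = 1\<^sub>m n" and AU: "A * U = U * dg n a"
  and ev: "eigenvalue A \<mu>"
  shows "\<exists>k<n. a k = \<mu>"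
proof (rule ccontr)
  assume nk: "\<not> (\<exists>k<n. a k = \<mu>)"
  obtain x where "eigenvector A x \<mu>" using ev unfolding eigenvalue_def by blast
  then have x: "x \<in> carrier_vec n" "x \<noteq> 0\<^sub>v n" "A *\<^sub>v x = \<mu> \<cdot>\<^sub>v x" unfolding eigenvector_def using A by auto
  have aU: "adj U \<in> carrier_mat n n" using U by simp
  note c = A U aU dg_carrier
  have UA: "adj U * A = dg n a * adj U"
  proof -
    have "adj U * A = adj U * A * (U * adj U)" using U2 A aU by (simp add: sqs[where N=n] del: assoc_mult_mat)
    also have "\<dots> = adj U * (A * U) * adj U" using c by (simp add: sqs[where N=n] del: assoc_mult_mat)
    also have "\<dots> = (adj U * U) * dg n a * adj U" unfolding AU using c by (simp add: sqs[where N=n] del: assoc_mult_mat)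
    finally show ?thesis using U1 aU by simp
  qed
  define y where "y = adj U *\<^sub>v x"
  have y: "y \<in> carrier_vec n" unfolding y_def using aU x by simp
  have "dg n a *\<^sub>v y = \<mu> \<cdot>\<^sub>v y"
  proof -
    have "dg n a *\<^sub>v y = (dg n a * adj U) *\<^sub>v x" unfolding y_def using assoc_mult_mat_vec[OF dg_carrier aU x(1)] by simp
    also have "\<dots> = adj U *\<^sub>v (A *\<^sub>v x)" unfolding UA[symmetric] using aU A x by simp
    also have "\<dots> = \<mu> \<cdot>\<^sub>v y" unfolding x(3) y_def using mult_mat_vec[OF aU x(1)] by simp
    finally show ?thesis .
  qed
  have y0: "y = 0\<^sub>v n"
  proof (rule eq_vecI)
    fix k assume "k < dim_vec (0\<^sub>v n)"
    then have k: "k < n" by simp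
    have "(dg n a *\<^sub>v y) $ k = a k * y $ k"
    proof -
      have "(dg n a *\<^sub>v y) $ k = (\<Sum>i<n. dg n a $$ (k,i) * y $ i)"
        using y k by (auto simp: scalar_prod_def atLeast0LessThan intro!: sum.cong)
      also have "\<dots> = dg n a $$ (k,k) * y $ k" by (rule sum_single) (use k in auto)
      finally show ?thesis using k by simp
    qed
    moreover have "(dg n a *\<^sub>v y) $ k = \<mu> * y $ k" using \<open>dg n a *\<^sub>v y = \<mu> \<cdot>\<^sub>v y\<close> y k by simp
    ultimately have "a k * y $ k = \<mu> * y $ k" by metis
    then have "(a k - \<mu>) * y $ k = 0" by (simp add: left_diff_distrib)
    moreover have "a k - \<mu> \<noteq> 0" using nk k by auto
    ultimately show "y $ k = 0\<^sub>v n $ k" using k by simp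
  qed (use y in simp)
  have "x = (U * adj U) *\<^sub>v x" using U2 x by simp
  also have "\<dots> = U *\<^sub>v y" unfolding y_def using assoc_mult_mat_vec[OF U aU x(1)] .
  also have "\<dots> = 0\<^sub>v n" unfolding y0 using U by (intro eq_vecI) (auto simp: scalar_prod_def)
  finally show False using x(2) by simp
qed

lemma proj_carrier[simp]: "proj \<Psi> \<in> carrier_mat (dim_vec \<Psi>) (dim_vec \<Psi>)"
  by (simp add: proj_def)

lemma proj_mult: assumes "\<Psi> \<in> carrier_vec n" "u \<in> carrier_vec n"
  shows "proj \<Psi> *\<^sub>v u = (u \<bullet>c \<Psi>) \<cdot>\<^sub>v \<Psi>"
proof (rule eq_vecI)
  fix i assume "i < dim_vec ((u \<bullet>c \<Psi>) \<cdot>\<^sub>v \<Psi>)"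
  then have i: "i < n" using assms by simp
  have "(proj \<Psi> *\<^sub>v u) $ i = (\<Sum>j<n. \<Psi> $ i * cnj (\<Psi> $ j) * u $ j)"
    using assms i by (auto simp: proj_def scalar_prod_def atLeast0LessThan intro!: sum.cong)
  also have "\<dots> = \<Psi> $ i * (u \<bullet>c \<Psi>)" using assms
    by (simp add: cscalar_sum sum_distrib_left mult_ac)
  finally show "(proj \<Psi> *\<^sub>v u) $ i = ((u \<bullet>c \<Psi>) \<cdot>\<^sub>v \<Psi>) $ i" using i assms by (simp add: mult.commute)
qed (use assms in \<open>simp add: proj_def\<close>)

lemma sum_ind: "m < (n::nat) \<Longrightarrow> (\<Sum>k<n. \<phi> k * (if k = m then c else 0)) = \<phi> m * (c::real)"
  by (subst sum_single[of m]) auto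

lemma sum6: assumes "m1 < n" "m2 < n" "m3 < n" "m4 < n" "m5 < n" "m6 < (n::nat)"
  shows "(\<Sum>k<n. \<phi> k * ((if k = m1 then c1 else 0) + (if k = m2 then c2 else 0) + (if k = m3 then c3 else 0)
     + (if k = m4 then c4 else 0) + (if k = m5 then c5 else 0) + (if k = m6 then (c6::real) else 0)))
   = \<phi> m1 * c1 + \<phi> m2 * c2 + \<phi> m3 * c3 + \<phi> m4 * c4 + \<phi> m5 * c5 + \<phi> m6 * c6"
  using assms by (simp only: distrib_left sum.distrib sum_ind)

lemma pair_bound: "i < D \<Longrightarrow> j < D \<Longrightarrow> i * D + j < D * (D::nat)"
proof -
  assume "i < D" "j < D"
  then have "i * D + j < i * D + D" by simp
  also have "\<dots> = Suc i * D" by simp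
  also have "\<dots> \<le> D * D" using \<open>i < D\<close> by (intro mult_right_mono) auto
  finally show ?thesis .
qed

lemma pair_div: "j < (D::nat) \<Longrightarrow> (i * D + j) div D = i" by simp
lemma pair_mod: "j < (D::nat) \<Longrightarrow> (i * D + j) mod D = j" by simp

lemma sg_eq: "k < D*D \<Longrightarrow> m < D*D \<Longrightarrow> (sg D k = m) = (k = sg D m)"
  using sg_props by metis


theorem theorem4:
  fixes D :: nat and \<Psi> :: "complex vec" and \<Omega> :: "complex mat"
    and \<beta> \<tau> \<delta> :: real
  assumes "D \<ge> 2"
    and "verification_op D \<Psi> \<Omega>"
    and "second_eig \<Omega> \<beta>"
    and "smallest_eig \<Omega> \<tau>"
    and "0 \<le> \<delta>" and "\<delta> \<le> 1"
  shows "(\<beta> \<ge> 1/2 \<longrightarrow> is_min (feasible_f D \<Psi> \<Omega> \<delta>)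
           (if \<delta> \<le> \<beta> then 0
            else if \<delta> \<le> (1 + \<beta>) / 2 then \<beta> * (\<delta> - \<beta>) / (1 - \<beta>)
            else (\<delta> * (2 - \<beta>) - 1) / (1 - \<beta>))) \<and>
         (\<beta> < 1/2 \<longrightarrow> is_min (feasible_f D \<Psi> \<Omega> \<delta>)
           (if \<delta> \<le> \<beta> then 0
            else if \<delta> \<le> (1 + \<tau>) / 2 then \<tau> * (\<delta> - \<beta>) / (1 + \<tau> - 2 * \<beta>)
            else if \<delta> \<le> (1 + \<beta>) / 2 then \<delta> - 1/2
            else (\<delta> * (2 - \<beta>) - 1) / (1 - \<beta>)))"
proof -
  from assms(2) have \<Psi>c: "\<Psi> \<in> carrier_vec D" and \<Psi>n: "\<Psi> \<bullet>c \<Psi> = 1" and \<Omega>c: "\<Omega> \<in> carrier_mat D D"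
    and h\<Omega>: "hermitian_mat \<Omega>" and p\<Omega>: "psd \<Omega>" and \<Omega>\<Psi>: "\<Omega> *\<^sub>v \<Psi> = \<Psi>"
    and nd: "\<And>v. v \<in> carrier_vec D \<Longrightarrow> \<Omega> *\<^sub>v v = v \<Longrightarrow> \<exists>c. v = c \<cdot>\<^sub>v \<Psi>"
    unfolding verification_op_def by auto
  from assms(3) have se: "eigenvalue \<Omega> (complex_of_real \<beta>)" "\<beta> < 1"
    "\<And>l. eigenvalue \<Omega> (complex_of_real l) \<Longrightarrow> l \<noteq> 1 \<Longrightarrow> l \<le> \<beta>"
    unfolding second_eig_def by auto
  from assms(4) have sm: "eigenvalue \<Omega> (complex_of_real \<tau>)"
    "\<And>l. eigenvalue \<Omega> (complex_of_real l) \<Longrightarrow> \<tau> \<le> l"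
    unfolding smallest_eig_def by auto
  have a\<Omega>: "adj \<Omega> = \<Omega>" using h\<Omega> unfolding hermitian_mat_def by simp
  obtain us where us: "length us = D" "set us \<subseteq> carrier_vec D"
     "\<forall>i<D. \<forall>j<D. us!i \<bullet>c us!j = (if i = j then 1 else 0)"
     "\<forall>i<D. \<exists>l::real. \<Omega> *\<^sub>v us!i = complex_of_real l \<cdot>\<^sub>v us!i"
    using spectral_list[OF \<Omega>c h\<Omega>] by blast
  obtain lam :: "nat \<Rightarrow> real" where lam: "\<And>i. i < D \<Longrightarrow> \<Omega> *\<^sub>v us!i = complex_of_real (lam i) \<cdot>\<^sub>v us!i"
    using us(4) by metis
  have usc: "\<And>i. i < D \<Longrightarrow> us!i \<in> carrier_vec D" using us(1,2) by auto
  have usn: "\<And>i. i < D \<Longrightarrow> us!i \<bullet>c us!i = 1" using us(3) by simp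
  define U where "U = mat_of_cols D us"
  have orth: "\<And>i j. i < D \<Longrightarrow> j < D \<Longrightarrow> us!i \<bullet>c us!j = (if i = j then 1 else 0)" using us(3) by blast
  note Uf = unitary_from_cols[OF us(2) us(1) orth, folded U_def]
  have Uc: "U \<in> carrier_mat D D" and U1: "adj U * U = 1\<^sub>m D" and U2: "U * adj U = 1\<^sub>m D"
    and Ucol: "\<And>i. i < D \<Longrightarrow> col U i = us!i" using Uf by auto
  define L where "L = dg D (\<lambda>k. complex_of_real (lam k))"
  have \<Omega>U: "\<Omega> * U = U * L" unfolding L_def
    by (rule mat_eq_cols_dg[OF \<Omega>c Uc]) (simp add: Ucol lam)
  have eigk: "eigenvalue \<Omega> (complex_of_real (lam k))" if k: "k < D" for k
    unfolding eigenvalue_def eigenvector_def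
    using usc[OF k] unit_nonzero[OF usc[OF k] usn[OF k]] lam[OF k] \<Omega>c by (intro exI[of _ "us!k"]) auto
  have lam0: "0 \<le> lam k" if k: "k < D" for k
  proof -
    have "0 \<le> Re ((\<Omega> *\<^sub>v us!k) \<bullet>c us!k)" using p\<Omega> usc[OF k] \<Omega>c unfolding psd_def by auto
    also have "(\<Omega> *\<^sub>v us!k) \<bullet>c us!k = complex_of_real (lam k) * (us!k \<bullet>c us!k)"
      unfolding lam[OF k] using usc[OF k] by simp
    finally show ?thesis using usn[OF k] by simp
  qed
  have lamc: "lam k = 1 \<or> (\<tau> \<le> lam k \<and> lam k \<le> \<beta>)" if k: "k < D" for k
    using se(3)[OF eigk[OF k]] sm(2)[OF eigk[OF k]] by auto
  have Ui: "\<exists>k<D. lam k = l" if evl: "eigenvalue \<Omega> (complex_of_real l)" for l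
  proof -
    obtain k where "k < D" "complex_of_real (lam k) = complex_of_real l"
      using eig_index[OF \<Omega>c Uc U1 U2 \<Omega>U[unfolded L_def] evl] by blast
    then show ?thesis by auto
  qed
  have ev1: "eigenvalue \<Omega> (complex_of_real 1)"
    unfolding eigenvalue_def eigenvector_def using \<Psi>c unit_nonzero[OF \<Psi>c \<Psi>n] \<Omega>\<Psi> \<Omega>c
    by (intro exI[of _ \<Psi>]) auto
  obtain ia where ia: "ia < D" "lam ia = 1" using Ui[OF ev1] by blast
  obtain ib where ib: "ib < D" "lam ib = \<beta>" using Ui[OF se(1)] by blast
  obtain ic where ic: "ic < D" "lam ic = \<tau>" using Ui[OF sm(1)] by blast
  have t: "0 \<le> \<tau>" "\<tau> \<le> \<beta>" "\<beta> < 1" using lam0[OF ic(1)] ic(2) sm(2)[OF se(1)] se(2) by auto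
  define g where "g = (\<lambda>k. if lam k = 1 then (1::real) else 0)"
  define P where "P = proj \<Psi>"
  have Pc: "P \<in> carrier_mat D D" unfolding P_def using proj_carrier[of \<Psi>] \<Psi>c by simp
  have Pk: "P *\<^sub>v col U k = complex_of_real (g k) \<cdot>\<^sub>v col U k" if k: "k < D" for k
  proof -
    have u: "us!k \<in> carrier_vec D" using usc[OF k] .
    have Pu: "P *\<^sub>v us!k = (us!k \<bullet>c \<Psi>) \<cdot>\<^sub>v \<Psi>" unfolding P_def using proj_mult[OF \<Psi>c u] .
    show ?thesis
    proof (cases "lam k = 1")
      case True
      then have "\<Omega> *\<^sub>v us!k = us!k" using lam[OF k] by simp
      then obtain c where c: "us!k = c \<cdot>\<^sub>v \<Psi>" using nd[OF u] by blast
      have "us!k \<bullet>c \<Psi> = c * (\<Psi> \<bullet>c \<Psi>)" unfolding c using \<Psi>c by simp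
      then have "P *\<^sub>v us!k = us!k" unfolding Pu using \<Psi>n c by simp
      then show ?thesis using True Ucol[OF k] u by (simp add: g_def)
    next
      case False
      have "complex_of_real (lam k) * (us!k \<bullet>c \<Psi>) = (\<Omega> *\<^sub>v us!k) \<bullet>c \<Psi>"
        unfolding lam[OF k] using u \<Psi>c by simp
      also have "\<dots> = us!k \<bullet>c (adj \<Omega> *\<^sub>v \<Psi>)" using cscalar_adj[OF \<Omega>c u \<Psi>c] .
      also have "\<dots> = us!k \<bullet>c \<Psi>" unfolding a\<Omega> \<Omega>\<Psi> ..
      finally have "(complex_of_real (lam k) - 1) * (us!k \<bullet>c \<Psi>) = 0" by (simp add: left_diff_distrib)
      moreover have "complex_of_real (lam k) - 1 \<noteq> 0" using False
        by (metis eq_iff_diff_eq_0 of_real_1 of_real_eq_iff)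
      ultimately have "us!k \<bullet>c \<Psi> = 0" by simp
      then have "P *\<^sub>v us!k = 0\<^sub>v D" unfolding Pu using \<Psi>c by (intro eq_vecI) auto
      then show ?thesis using False Ucol[OF k] u by (intro eq_vecI) (auto simp: g_def)
    qed
  qed
  define G where "G = dg D (\<lambda>k. complex_of_real (g k))"
  have PU: "P * U = U * G" unfolding G_def by (rule mat_eq_cols_dg[OF Pc Uc Pk])
  have aU: "adj U \<in> carrier_mat D D" using Uc by simp
  define W where "W = kron U U"
  have Wc: "W \<in> carrier_mat (D*D) (D*D)" unfolding W_def using kron_carrier[OF Uc Uc] .
  have one: "kron (1\<^sub>m D) (1\<^sub>m D) = 1\<^sub>m (D*D)"
    unfolding one_dg kron_dg by simp
  have W1: "adj W * W = 1\<^sub>m (D*D)"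
    unfolding W_def adj_kron kron_mult[OF aU aU Uc Uc] U1 one ..
  have W2: "W * adj W = 1\<^sub>m (D*D)"
    unfolding W_def adj_kron kron_mult[OF Uc Uc aU aU] U2 one ..
  have SWS: "swap_op D * W * swap_op D = W" unfolding W_def using swap_kron[OF Uc Uc] .
  have SW: "swap_op D * W = W * swap_op D"
  proof -
    have SWc: "swap_op D * W \<in> carrier_mat (D*D) (D*D)" using mult_carrier_mat[OF swap_carrier Wc] .
    have "swap_op D * W = swap_op D * W * (swap_op D * swap_op D)" unfolding swap_swap using right_mult_one_mat[OF SWc] by simp
    also have "\<dots> = (swap_op D * W * swap_op D) * swap_op D"
      using assoc_mult_mat[OF SWc swap_carrier swap_carrier] by simp
    finally show ?thesis unfolding SWS .
  qed
  have Lc: "L \<in> carrier_mat D D" unfolding L_def by simp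
  have Gc: "G \<in> carrier_mat D D" unfolding G_def by simp
  define KX where "KX = dg (D*D) (\<lambda>k. complex_of_real (lam (k div D)) * 1)"
  define KY where "KY = dg (D*D) (\<lambda>k. complex_of_real (lam (k div D)) * complex_of_real (g (k mod D)))"
  have XW: "kron \<Omega> (1\<^sub>m D) * W = W * KX"
  proof -
    have "kron \<Omega> (1\<^sub>m D) * W = kron (\<Omega> * U) (1\<^sub>m D * U)"
      unfolding W_def using kron_mult[OF \<Omega>c one_carrier_mat Uc Uc] .
    also have "\<dots> = kron (U * L) (U * 1\<^sub>m D)" unfolding \<Omega>U using Uc by simp
    also have "\<dots> = W * kron L (1\<^sub>m D)" unfolding W_def using kron_mult[OF Uc Uc Lc one_carrier_mat] by simp
    also have "kron L (1\<^sub>m D) = KX" unfolding L_def KX_def one_dg kron_dg ..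
    finally show ?thesis .
  qed
  have YW: "kron \<Omega> P * W = W * KY"
  proof -
    have "kron \<Omega> P * W = kron (\<Omega> * U) (P * U)"
      unfolding W_def using kron_mult[OF \<Omega>c Pc Uc Uc] .
    also have "\<dots> = kron (U * L) (U * G)" unfolding \<Omega>U PU ..
    also have "\<dots> = W * kron L G" unfolding W_def using kron_mult[OF Uc Uc Lc Gc] by simp
    also have "kron L G = KY" unfolding L_def G_def KY_def kron_dg ..
    finally show ?thesis .
  qed
  have Xc: "kron \<Omega> (1\<^sub>m D) \<in> carrier_mat (D*D) (D*D)" using kron_carrier[OF \<Omega>c one_carrier_mat] .
  have Yc: "kron \<Omega> P \<in> carrier_mat (D*D) (D*D)" using kron_carrier[OF \<Omega>c Pc] .
  have pform: "p_val D \<Omega> \<rho> = (\<Sum>k<D*D. lam (k div D) * Re ((adj W * \<rho> * W) $$ (k,k)))"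
    if r: "\<rho> \<in> carrier_mat (D*D) (D*D)" for \<rho>
  proof -
    have "mtrace (kron \<Omega> (1\<^sub>m D) * \<rho>) = mtrace (KX * (adj W * \<rho> * W))"
      using trace_red[OF Wc W1 W2 Xc _ XW r] KX_def by simp
    also have "\<dots> = (\<Sum>k<D*D. (complex_of_real (lam (k div D)) * 1) * (adj W * \<rho> * W) $$ (k,k))"
      unfolding KX_def using dg_mult_trace[OF R_carrier[OF Wc W1 W2 r]] .
    finally show ?thesis unfolding p_val_def by (simp add: Re_sum)
  qed
  have fform: "f_val \<Psi> \<Omega> \<rho> = (\<Sum>k<D*D. lam (k div D) * g (k mod D) * Re ((adj W * \<rho> * W) $$ (k,k)))"
    if r: "\<rho> \<in> carrier_mat (D*D) (D*D)" for \<rho>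
  proof -
    have "mtrace (kron \<Omega> P * \<rho>) = mtrace (KY * (adj W * \<rho> * W))"
      using trace_red[OF Wc W1 W2 Yc _ YW r] KY_def by simp
    also have "\<dots> = (\<Sum>k<D*D. (complex_of_real (lam (k div D)) * complex_of_real (g (k mod D))) * (adj W * \<rho> * W) $$ (k,k))"
      unfolding KY_def using dg_mult_trace[OF R_carrier[OF Wc W1 W2 r]] .
    finally show ?thesis unfolding f_val_def P_def[symmetric] by (simp add: Re_sum)
  qed
  have LB: "\<exists>r. (\<forall>k<D*D. r k \<ge> 0) \<and> (\<Sum>k<D*D. r k) = 1 \<and> (\<forall>k<D*D. r (sg D k) = r k) \<and>
     y = (\<Sum>k<D*D. lam (k div D) * (if lam (k mod D) = 1 then 1 else 0) * r k) \<and> \<delta> \<le> (\<Sum>k<D*D. lam (k div D) * r k)"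
    if y: "y \<in> feasible_f D \<Psi> \<Omega> \<delta>" for y
  proof -
    obtain \<rho> where \<rho>: "density_op (D*D) \<rho>" "perm_invariant2 D \<rho>" "p_val D \<Omega> \<rho> \<ge> \<delta>" "y = f_val \<Psi> \<Omega> \<rho>"
      using y unfolding feasible_f_def by blast
    have rc: "\<rho> \<in> carrier_mat (D*D) (D*D)" and pr: "psd \<rho>" and tr: "mtrace \<rho> = 1"
      using \<rho>(1) unfolding density_op_def by auto
    have inv: "swap_op D * \<rho> * adj (swap_op D) = \<rho>" using \<rho>(2) unfolding perm_invariant2_def .
    define R where "R = adj W * \<rho> * W"
    have Rc: "R \<in> carrier_mat (D*D) (D*D)" unfolding R_def using R_carrier[OF Wc W1 W2 rc] .
    define r where "r = (\<lambda>k. Re (R $$ (k,k)))"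
    have r0: "\<forall>k<D*D. r k \<ge> 0"
    proof (intro allI impI)
      fix k assume k: "k < D*D"
      have cW: "col W k \<in> carrier_vec (dim_row \<rho>)" using Wc rc k by simp
      show "r k \<ge> 0" unfolding r_def R_def R_diag[OF Wc W1 W2 rc k]
        using pr cW unfolding psd_def by blast
    qed
    have r1: "(\<Sum>k<D*D. r k) = 1"
    proof -
      have "mtrace R = mtrace \<rho>" unfolding R_def using R_trace[OF Wc W1 W2 rc] .
      then have "(\<Sum>k<D*D. R $$ (k,k)) = 1" using tr Rc unfolding mtrace_def by simp
      then show ?thesis unfolding r_def by (metis Re_sum one_complex.sel(1))
    qed
    have rs: "\<forall>k<D*D. r (sg D k) = r k"
    proof (intro allI impI)
      fix k assume k: "k < D*D"
      have "R $$ (k,k) = (swap_op D * R * swap_op D) $$ (k,k)"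
        unfolding R_def R_swap[OF Wc W1 W2 SW rc inv] ..
      also have "\<dots> = R $$ (sg D k, sg D k)" using swap_conj[OF Rc k k] .
      finally show "r (sg D k) = r k" unfolding r_def by simp
    qed
    show ?thesis
      using r0 r1 rs \<rho>(3,4) pform[OF rc] fform[OF rc] unfolding r_def R_def g_def
      by (intro exI[of _ r]) (simp add: r_def R_def)
  qed
  have ga: "g ia = 1" using ia by (simp add: g_def)
  have gb: "g ib = 0" using ib t by (simp add: g_def)
  have gc: "g ic = 0" using ic t by (simp add: g_def)
  have UB: "w2 * (\<beta> / 2) + w3 * (\<tau> / 2) + w4 \<in> feasible_f D \<Psi> \<Omega> \<delta>"
    if w: "0 \<le> w1" "0 \<le> w2" "0 \<le> w3" "0 \<le> w4" "w1 + w2 + w3 + w4 = 1"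
     "\<delta> \<le> w1 * \<beta> + w2 * ((1 + \<beta>) / 2) + w3 * ((1 + \<tau>) / 2) + w4" for w1 w2 w3 w4
  proof -
    define m1 where "m1 = ib * D + ib"
    define m2 where "m2 = ia * D + ib"
    define m3 where "m3 = ib * D + ia"
    define m4 where "m4 = ia * D + ic"
    define m5 where "m5 = ic * D + ia"
    define m6 where "m6 = ia * D + ia"
    have mb: "m1 < D*D" "m2 < D*D" "m3 < D*D" "m4 < D*D" "m5 < D*D" "m6 < D*D"
      unfolding m1_def m2_def m3_def m4_def m5_def m6_def using ia ib ic pair_bound by auto
    define d where "d = (\<lambda>k. (if k = m1 then w1 else 0) + (if k = m2 then w2/2 else 0) + (if k = m3 then w2/2 else 0)
      + (if k = m4 then w3/2 else 0) + (if k = m5 then w3/2 else 0) + (if k = m6 then w4 else 0))"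
    have dsum: "(\<Sum>k<D*D. \<phi> k * d k) = \<phi> m1 * w1 + \<phi> m2 * (w2/2) + \<phi> m3 * (w2/2) + \<phi> m4 * (w3/2) + \<phi> m5 * (w3/2) + \<phi> m6 * w4"
      for \<phi> unfolding d_def using sum6[OF mb] .
    have d0: "\<And>k. k < D*D \<Longrightarrow> d k \<ge> 0" unfolding d_def using w by auto
    have d1: "(\<Sum>k<D*D. d k) = 1" using dsum[of "\<lambda>_. 1"] w(5) by simp
    have sgm: "sg D m1 = m1" "sg D m2 = m3" "sg D m3 = m2" "sg D m4 = m5" "sg D m5 = m4" "sg D m6 = m6"
      unfolding m1_def m2_def m3_def m4_def m5_def m6_def using ia ib ic sg_pair by auto
    have dsym: "d (sg D k) = d k" if k: "k < D*D" for k
    proof -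
      have e: "(sg D k = m1) = (k = m1)" "(sg D k = m2) = (k = m3)" "(sg D k = m3) = (k = m2)"
        "(sg D k = m4) = (k = m5)" "(sg D k = m5) = (k = m4)" "(sg D k = m6) = (k = m6)"
        using sg_eq[OF k mb(1)] sg_eq[OF k mb(2)] sg_eq[OF k mb(3)] sg_eq[OF k mb(4)]
          sg_eq[OF k mb(5)] sg_eq[OF k mb(6)] sgm by auto
      show ?thesis unfolding d_def e by simp
    qed
    define \<rho> where "\<rho> = W * dg (D*D) (\<lambda>k. complex_of_real (d k)) * adj W"
    note ds = dg_state[OF Wc W1 W2 SW d0 d1 dsym, folded \<rho>_def]
    have rc: "\<rho> \<in> carrier_mat (D*D) (D*D)" using ds(1) unfolding density_op_def by auto
    have R: "adj W * \<rho> * W = dg (D*D) (\<lambda>k. complex_of_real (d k))" unfolding \<rho>_def using R_of_dg[OF Wc W1 W2] .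
    have dm: "m1 div D = ib" "m2 div D = ia" "m3 div D = ib" "m4 div D = ia" "m5 div D = ic" "m6 div D = ia"
      "m1 mod D = ib" "m2 mod D = ib" "m3 mod D = ia" "m4 mod D = ic" "m5 mod D = ia" "m6 mod D = ia"
      unfolding m1_def m2_def m3_def m4_def m5_def m6_def using ia ib ic by auto
    have "p_val D \<Omega> \<rho> = (\<Sum>k<D*D. lam (k div D) * d k)"
      unfolding pform[OF rc] R by (intro sum.cong) auto
    also have "\<dots> = w1 * \<beta> + w2 * ((1 + \<beta>) / 2) + w3 * ((1 + \<tau>) / 2) + w4"
      unfolding dsum dm using ia ib ic by (simp add: field_simps)
    finally have pv: "p_val D \<Omega> \<rho> \<ge> \<delta>" using w(6) by simp
    have "f_val \<Psi> \<Omega> \<rho> = (\<Sum>k<D*D. (lam (k div D) * g (k mod D)) * d k)"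
      unfolding fform[OF rc] R by (intro sum.cong) auto
    also have "\<dots> = w2 * (\<beta> / 2) + w3 * (\<tau> / 2) + w4"
      unfolding dsum dm using ia ib ic ga gb gc by (simp add: field_simps)
    finally have fv: "f_val \<Psi> \<Omega> \<rho> = w2 * (\<beta> / 2) + w3 * (\<tau> / 2) + w4" .
    have dd: "density_op (D*D) \<rho>" "perm_invariant2 D \<rho>" using ds by auto
    show ?thesis unfolding feasible_f_def
      by (rule CollectI, rule exI[of _ \<rho>]) (use dd pv fv in auto)
  qed
  show ?thesis
    by (rule final_real[OF lamc t assms(5,6) LB UB]) auto
qed

end
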